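(* Let $D$ be a knot diagram, let $2\le k\le\infty$, and let $M$ be the game matrix of some version of the $k$-color region select game on $D$. If $\boldsymbol\ell$ is a null pattern of $M$ with $\boldsymbol\ell(r_1)=\boldsymbol\ell(r_2)=0$ for two adjacent regions $r_1,r_2$ of $D$, then $\boldsymbol\ell=\mathbf 0$.
   Context: Diagrams: a link (knot) diagram $D$ is the underlying graph of a regular projection of a link (knot) into $S^2$. Its vertices are the crossings, each of valence 4, and over/under information is ignored. Components without crossings are closed loops, each regarded as one edge with no vertices. Regions of $D$ are the connected components of $S^2\setminus D$. A vertex or edge is incident to a region if it lies in the boundary of that region. Two regions are adjacent if they are incident to a common edge. A vertex $v$ is reducible if some circle in $S^2$ meets $D$ transversely only at $v$, and irreducible otherwise. An irreducible vertex is incident to four distinct regions. A reducible vertex $v$ is incident to exactly three regions $r_0,r_1,r_2$, where $r_0$ touches $v$ from two sides and $r_1,r_2$ touch it from one side. A knot diagram with $n$ vertices has $n+2$ regions. A knot diagram is reduced if all its vertices are irreducible. Ring: for an integer $k\ge2$ let $\mathbb{Z}_k=\mathbb{Z}/k\mathbb{Z}$, and for $k=\infty$ let $\mathbb{Z}_\infty=\mathbb{Z}$. Game versions: a version of the $k$-color region select game on $D$ is a choice of an increment number $a(v,r)\in\mathbb{Z}_k$ for every incident vertex–region pair, subject to the following rules. - If $k<\infty$ and $v$ is irreducible, then $a(v,r)=a_v$ is the same for all regions $r$ incident to $v$, and $a_v$ is not a zero divisor of $\mathbb{Z}_k$. - If $k<\infty$ and $v$ is reducible, then $a(v,r_0)$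 is arbitrary, while $a(v,r_1)$ and $a(v,r_2)$ are not zero divisors. - If $k=\infty$, then $a(v,r)=1$, except that $a(v,r_0)\in\mathbb{Z}$ is arbitrary when $v$ is reducible. - The original game is the version in which all increment numbers equal $1$. Game matrix: enumerate the vertices as $v_1,\dots,v_n$ and the regions as $r_1,\dots,r_m$. The game matrix is the $n\times m$ matrix $M$ over $\mathbb{Z}_k$ with $M_{ij}=a(v_i,r_j)$ if $v_i$ is incident to $r_j$, and $M_{ij}=0$ otherwise. Patterns and configurations: a push pattern is a vector $\mathbf p\in\mathbb{Z}_k^m$, and $\mathbf p(r_j)=p_j$ is the number of times $r_j$ is pushed. A region $r$ is not pushed in $\mathbf p$ if $\mathbf p(r)=0$. A color configuration is a vector $\mathbf c\in\mathbb{Z}_k^n$. Applying $\mathbf p$ to $\mathbf c$ yields $\mathbf c+M\mathbf p$. The configuration $\mathbf c$ is solvable if some $\mathbf p$ satisfies $M\mathbf p=-\mathbf c$; such a $\mathbf p$ is a solving pattern for $\mathbf c$. $D$ is always solvable in the version if every $\mathbf c\in\mathbb{Z}_k^n$ is solvable. A null pattern is an element of $Ker_k(M)=\{\mathbf p\in\mathbb{Z}_k^m: M\mathbf p=0\}$. *)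

theory Defs
  imports Main "HOL-Library.Extended_Nat" "HOL-Number_Theory.Cong"
begin

text \<open>
Combinatorial encoding of a knot diagram (with at least one crossing) as a
combinatorial map: a finite set of darts H, a vertex rotation sigma whose
orbits are the crossings (each of size 4), and a fixed-point-free involution
alpha pairing darts into edges.  The dart d marks the corner of its vertex that lies in
the region of d.  Planarity is the Euler formula V - E + F = 2, and being a
knot (one component) means that the straight-ahead moves (sigma twice) together
with alpha connect all darts.
\<close>

definition orb :: "('d \<Rightarrow> 'd) \<Rightarrow> 'd \<Rightarrow> 'd set" where
  "orb f x = {(f ^^ n) x | n. True}"

definition dvertices :: "'d set \<Rightarrow> ('d \<Rightarrow> 'd) \<Rightarrow> 'd set set" where
  "dvertices H \<sigma> = {orb \<sigma> d | d. d \<in> H}"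

definition dedges :: "'d set \<Rightarrow> ('d \<Rightarrow> 'd) \<Rightarrow> 'd set set" where
  "dedges H \<alpha> = {{d, \<alpha> d} | d. d \<in> H}"

definition dregions :: "'d set \<Rightarrow> ('d \<Rightarrow> 'd) \<Rightarrow> ('d \<Rightarrow> 'd) \<Rightarrow> 'd set set" where
  "dregions H \<sigma> \<alpha> = {orb (\<sigma> \<circ> \<alpha>) d | d. d \<in> H}"

definition straight_step :: "('d \<Rightarrow> 'd) \<Rightarrow> ('d \<Rightarrow> 'd) \<Rightarrow> 'd \<Rightarrow> 'd \<Rightarrow> bool" where
  "straight_step \<sigma> \<alpha> x y \<longleftrightarrow> y = \<sigma> (\<sigma> x) \<or> y = \<alpha> x"

definition knot_diagram :: "'d set \<Rightarrow> ('d \<Rightarrow> 'd) \<Rightarrow> ('d \<Rightarrow> 'd) \<Rightarrow> bool" where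
  "knot_diagram H \<sigma> \<alpha> \<longleftrightarrow>
     finite H \<and> H \<noteq> {} \<and>
     bij_betw \<sigma> H H \<and>
     (\<forall>d\<in>H. card (orb \<sigma> d) = 4) \<and>
     (\<forall>d\<in>H. \<alpha> d \<in> H \<and> \<alpha> d \<noteq> d \<and> \<alpha> (\<alpha> d) = d) \<and>
     int (card (dvertices H \<sigma>)) - int (card (dedges H \<alpha>))
        + int (card (dregions H \<sigma> \<alpha>)) = 2 \<and>
     (\<forall>d\<in>H. \<forall>e\<in>H. (straight_step \<sigma> \<alpha>)\<^sup>*\<^sup>* d e)"

definition incident :: "'d set \<Rightarrow> 'd set \<Rightarrow> bool" where
  "incident v r \<longleftrightarrow> v \<inter> r \<noteq> {}"

definition irreducible_vertex :: "'d set \<Rightarrow> ('d \<Rightarrow> 'd) \<Rightarrow> ('d \<Rightarrow> 'd) \<Rightarrow> 'd set \<Rightarrow> bool" where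
  "irreducible_vertex H \<sigma> \<alpha> v \<longleftrightarrow> card {r \<in> dregions H \<sigma> \<alpha>. incident v r} = 4"

definition adjacent :: "'d set \<Rightarrow> ('d \<Rightarrow> 'd) \<Rightarrow> 'd set \<Rightarrow> 'd set \<Rightarrow> bool" where
  "adjacent H \<alpha> r1 r2 \<longleftrightarrow> (\<exists>d\<in>H. d \<in> r1 \<and> \<alpha> d \<in> r2)"

text \<open>The ring Z_k is modelled by integers modulo m, where m = k for finite k
and m = 0 (i.e. plain equality in Z) for k = infinity.\<close>
definition modulus :: "enat \<Rightarrow> int" where
  "modulus k = (case k of enat n \<Rightarrow> int n | \<infinity> \<Rightarrow> 0)"

definition zero_divisor_mod :: "int \<Rightarrow> int \<Rightarrow> bool" where
  "zero_divisor_mod m a \<longleftrightarrow> (\<exists>b. \<not> [b = 0] (mod m) \<and> [a * b = 0] (mod m))"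

text \<open>A version of the k-colour region select game: increments a v r for each
incident vertex-region pair.  A region r touches v from exactly one side iff
exactly one corner of v lies in r.\<close>
definition game_version ::
  "enat \<Rightarrow> 'd set \<Rightarrow> ('d \<Rightarrow> 'd) \<Rightarrow> ('d \<Rightarrow> 'd) \<Rightarrow> ('d set \<Rightarrow> 'd set \<Rightarrow> int) \<Rightarrow> bool" where
  "game_version k H \<sigma> \<alpha> a \<longleftrightarrow>
    (if k = \<infinity> then
       (\<forall>v\<in>dvertices H \<sigma>. \<forall>r\<in>dregions H \<sigma> \<alpha>. incident v r \<longrightarrow>
          (irreducible_vertex H \<sigma> \<alpha> v \<or> card (v \<inter> r) = 1) \<longrightarrow> a v r = 1)
     else
       (\<forall>v\<in>dvertices H \<sigma>.
          (irreducible_vertex H \<sigma> \<alpha> v \<longrightarrow>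
             (\<exists>c. \<not> zero_divisor_mod (modulus k) c \<and>
                (\<forall>r\<in>dregions H \<sigma> \<alpha>. incident v r \<longrightarrow> [a v r = c] (mod modulus k)))) \<and>
          (\<not> irreducible_vertex H \<sigma> \<alpha> v \<longrightarrow>
             (\<forall>r\<in>dregions H \<sigma> \<alpha>. card (v \<inter> r) = 1 \<longrightarrow>
                \<not> zero_divisor_mod (modulus k) (a v r)))))"

definition game_apply ::
  "'d set \<Rightarrow> ('d \<Rightarrow> 'd) \<Rightarrow> ('d \<Rightarrow> 'd) \<Rightarrow> ('d set \<Rightarrow> 'd set \<Rightarrow> int) \<Rightarrow> ('d set \<Rightarrow> int) \<Rightarrow> 'd set \<Rightarrow> int" where
  "game_apply H \<sigma> \<alpha> a p v = (\<Sum>r\<in>{r \<in> dregions H \<sigma> \<alpha>. incident v r}. a v r * p r)"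

definition null_pattern ::
  "enat \<Rightarrow> 'd set \<Rightarrow> ('d \<Rightarrow> 'd) \<Rightarrow> ('d \<Rightarrow> 'd) \<Rightarrow> ('d set \<Rightarrow> 'd set \<Rightarrow> int) \<Rightarrow> ('d set \<Rightarrow> int) \<Rightarrow> bool" where
  "null_pattern k H \<sigma> \<alpha> a p \<longleftrightarrow>
     (\<forall>v\<in>dvertices H \<sigma>. [game_apply H \<sigma> \<alpha> a p v = 0] (mod modulus k))"

end

theory Submission
  imports Defs
begin
section \<open>Periods of injective self-maps of finite sets\<close>

lemma funpow_in:
  assumes "f ` H \<subseteq> H" "y \<in> H" shows "(f ^^ n) y \<in> H"
  using assms by (induction n) auto

lemma funpow_inj_on:
  assumes "inj_on f H" "f ` H \<subseteq> H" shows "inj_on (f ^^ n) H"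
proof (induction n)
  case 0 then show ?case by simp
next
  case (Suc n)
  have sub: "(f ^^ n) ` H \<subseteq> H" using funpow_in[OF assms(2)] by blast
  have "inj_on (f \<circ> (f ^^ n)) H"
    using Suc inj_on_subset[OF assms(1) sub] by (intro comp_inj_on) auto
  then show ?case by (simp add: comp_def)
qed

lemma period_exists:
  assumes "finite H" "inj_on f H" "f ` H \<subseteq> H" "y \<in> H"
  shows "\<exists>n>0. (f ^^ n) y = y"
proof -
  let ?g = "\<lambda>i. (f ^^ i) y"
  have "?g ` {..card H} \<subseteq> H" using funpow_in[OF assms(3,4)] by auto
  hence "card (?g ` {..card H}) \<le> card H" using assms(1) card_mono by blast
  hence "\<not> inj_on ?g {..card H}" using card_image by fastforce
  then obtain i j where ij: "i \<le> card H" "j \<le> card H" "i \<noteq> j" "?g i = ?g j"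
    unfolding inj_on_def by auto
  have key: "(f ^^ (b - a)) y = y" if "a < b" "?g a = ?g b" for a b
  proof -
    have "(f ^^ a) ((f ^^ (b - a)) y) = (f ^^ a) y"
      using that by (metis funpow_add comp_apply le_add_diff_inverse2 less_imp_le add.commute)
    moreover have "(f ^^ (b - a)) y \<in> H" using funpow_in[OF assms(3,4)] .
    ultimately show ?thesis using funpow_inj_on[OF assms(2,3), of a] assms(4)
      by (auto simp: inj_on_def)
  qed
  show ?thesis
  proof (cases "i < j")
    case True thus ?thesis using key[of i j] ij by (intro exI[of _ "j-i"]) auto
  next
    case False hence "j < i" using ij by auto
    thus ?thesis using key[of j i] ij by (intro exI[of _ "i-j"]) auto
  qed
qed

definition per :: "('d \<Rightarrow> 'd) \<Rightarrow> 'd \<Rightarrow> nat" where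
  "per f y = (LEAST n. 0 < n \<and> (f ^^ n) y = y)"

locale perm_on =
  fixes H :: "'d set" and f :: "'d \<Rightarrow> 'd"
  assumes fin: "finite H" and inj: "inj_on f H" and img: "f ` H \<subseteq> H"
begin

lemma in_H: "y \<in> H \<Longrightarrow> (f ^^ n) y \<in> H"
  using funpow_in[OF img] by blast

lemma per_props:
  assumes "y \<in> H" shows "0 < per f y" "(f ^^ per f y) y = y"
proof -
  obtain n where "n > 0" "(f ^^ n) y = y" using period_exists[OF fin inj img assms] by blast
  hence "0 < per f y \<and> (f ^^ per f y) y = y" unfolding per_def
    using LeastI[of "\<lambda>n. 0 < n \<and> (f ^^ n) y = y" n] by blast
  thus "0 < per f y" "(f ^^ per f y) y = y" by auto
qed

lemma per_min:
  assumes "0 < n" "n < per f y" shows "(f ^^ n) y \<noteq> y"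
  using assms not_less_Least unfolding per_def by blast

lemma funpow_mod:
  assumes "y \<in> H" shows "(f ^^ n) y = (f ^^ (n mod per f y)) y"
proof -
  have "(f ^^ (per f y * q)) y = y" for q
    by (induction q) (simp_all add: funpow_add per_props[OF assms] del: funpow.simps)
  hence "(f ^^ (n mod per f y)) ((f ^^ (per f y * (n div per f y))) y) = (f ^^ (n mod per f y)) y"
    by simp
  thus ?thesis
    by (metis comp_apply funpow_add div_mult_mod_eq add.commute mult.commute)
qed

lemma funpow_distinct:
  assumes "y \<in> H" "i < per f y" "j < per f y" "(f ^^ i) y = (f ^^ j) y"
  shows "i = j"
proof (rule ccontr)
  assume ne: "i \<noteq> j"
  have key: False if "a < b" "b < per f y" "(f ^^ a) y = (f ^^ b) y" for a b
  proof -
    have "(f ^^ a) ((f ^^ (b - a)) y) = (f ^^ a) y"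
      using that by (metis funpow_add comp_apply le_add_diff_inverse2 less_imp_le add.commute)
    moreover have "(f ^^ (b - a)) y \<in> H" using in_H[OF assms(1)] .
    ultimately have "(f ^^ (b - a)) y = y" using funpow_inj_on[OF inj img, of a] assms(1)
      by (auto simp: inj_on_def)
    thus False using per_min[of "b - a" y] that by auto
  qed
  show False using ne key[of i j] key[of j i] assms by (cases "i < j") auto
qed

lemma orb_eq:
  assumes "y \<in> H" shows "orb f y = (\<lambda>i. (f ^^ i) y) ` {..<per f y}"
proof -
  have "(f ^^ n) y \<in> (\<lambda>i. (f ^^ i) y) ` {..<per f y}" for n
    using funpow_mod[OF assms, of n] per_props[OF assms] by auto
  thus ?thesis unfolding orb_def by auto
qed

lemma card_orb:
  assumes "y \<in> H" shows "card (orb f y) = per f y"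
proof -
  have "inj_on (\<lambda>i. (f ^^ i) y) {..<per f y}"
    using funpow_distinct[OF assms] by (auto simp: inj_on_def)
  thus ?thesis using orb_eq[OF assms] card_image by fastforce
qed

lemma orb_subset: "y \<in> H \<Longrightarrow> orb f y \<subseteq> H"
  unfolding orb_def using in_H by auto

lemma self_in_orb: "y \<in> orb f y"
  unfolding orb_def by (auto intro: exI[of _ 0])

lemma funpow_in_orb: "(f ^^ n) y \<in> orb f y"
  unfolding orb_def by auto

lemma orb_funpow:
  assumes "y \<in> H" shows "orb f ((f ^^ m) y) = orb f y"
proof
  show "orb f ((f ^^ m) y) \<subseteq> orb f y"
  proof
    fix x assume "x \<in> orb f ((f ^^ m) y)"
    then obtain n where "x = (f ^^ n) ((f ^^ m) y)" unfolding orb_def by auto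
    hence "x = (f ^^ (n + m)) y" by (simp add: funpow_add)
    thus "x \<in> orb f y" by (simp add: funpow_in_orb)
  qed
next
  show "orb f y \<subseteq> orb f ((f ^^ m) y)"
  proof
    fix x assume "x \<in> orb f y"
    then obtain n where x: "x = (f ^^ n) y" unfolding orb_def by auto
    define p where "p = per f y"
    have p0: "0 < p" using per_props(1)[OF assms] p_def by simp
    have "(f ^^ (n + (p - 1) * m)) ((f ^^ m) y) = (f ^^ (n + (p - 1) * m + m)) y"
      by (simp add: funpow_add)
    also have "n + (p - 1) * m + m = n + p * m" using p0 by (cases p) auto
    also have "(f ^^ (n + p * m)) y = (f ^^ n) y"
    proof -
      have "(n + p * m) mod p = n mod p" by simp
      thus ?thesis using funpow_mod[OF assms, of "n + p * m"] funpow_mod[OF assms, of n] p_def by simp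
    qed
    finally have "x = (f ^^ (n + (p - 1) * m)) ((f ^^ m) y)" using x by simp
    thus "x \<in> orb f ((f ^^ m) y)" by (rule ssubst) (rule funpow_in_orb)
  qed
qed

lemma orb_step: "y \<in> H \<Longrightarrow> orb f (f y) = orb f y"
  using orb_funpow[of y 1] by simp

lemma orb_mem_eq:
  assumes "y \<in> H" "x \<in> orb f y" shows "orb f x = orb f y"
proof -
  obtain n where "x = (f ^^ n) y" using assms(2) unfolding orb_def by auto
  thus ?thesis using orb_funpow[OF assms(1)] by simp
qed

end

locale KD =
  fixes H :: "'d set" and \<sigma> \<alpha> :: "'d \<Rightarrow> 'd"
  assumes kd: "knot_diagram H \<sigma> \<alpha>"
begin

lemma finH: "finite H" and neH: "H \<noteq> {}" and bij\<sigma>: "bij_betw \<sigma> H H"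
  and orb4: "\<And>d. d \<in> H \<Longrightarrow> card (orb \<sigma> d) = 4"
  and \<alpha>H: "\<And>d. d \<in> H \<Longrightarrow> \<alpha> d \<in> H"
  and \<alpha>ne: "\<And>d. d \<in> H \<Longrightarrow> \<alpha> d \<noteq> d"
  and \<alpha>\<alpha>: "\<And>d. d \<in> H \<Longrightarrow> \<alpha> (\<alpha> d) = d"
  and euler: "int (card (dvertices H \<sigma>)) - int (card (dedges H \<alpha>)) + int (card (dregions H \<sigma> \<alpha>)) = 2"
  and conn: "\<And>d e. d \<in> H \<Longrightarrow> e \<in> H \<Longrightarrow> (straight_step \<sigma> \<alpha>)\<^sup>*\<^sup>* d e"
  using kd unfolding knot_diagram_def by auto

lemma \<sigma>H: "d \<in> H \<Longrightarrow> \<sigma> d \<in> H"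
  using bij\<sigma> bij_betwE by blast

lemma inj\<sigma>: "inj_on \<sigma> H"
  using bij\<sigma> bij_betw_imp_inj_on by blast

lemma inj\<alpha>: "inj_on \<alpha> H"
  by (metis \<alpha>\<alpha> inj_onI)

sublocale sg: perm_on H \<sigma>
  using finH inj\<sigma> \<sigma>H by unfold_locales auto

sublocale ph: perm_on H "\<sigma> \<circ> \<alpha>"
  using finH inj\<sigma> \<sigma>H inj\<alpha> \<alpha>H
  by unfold_locales (auto intro!: comp_inj_on inj_on_subset[OF inj\<sigma>])

abbreviation V :: "'d \<Rightarrow> 'd set" where "V d \<equiv> orb \<sigma> d"
abbreviation F :: "'d \<Rightarrow> 'd set" where "F d \<equiv> orb (\<sigma> \<circ> \<alpha>) d"

lemma per4: "d \<in> H \<Longrightarrow> per \<sigma> d = 4"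
  using sg.card_orb orb4 by metis

lemma \<sigma>4: "d \<in> H \<Longrightarrow> \<sigma> (\<sigma> (\<sigma> (\<sigma> d))) = d"
  using sg.per_props(2)[of d] per4[of d] by (simp add: numeral_eq_Suc)

lemma V_eq: "d \<in> H \<Longrightarrow> V d = {d, \<sigma> d, \<sigma> (\<sigma> d), \<sigma> (\<sigma> (\<sigma> d))}"
  using sg.orb_eq[of d] per4[of d] by (simp add: numeral_eq_Suc lessThan_Suc insert_commute)

lemma \<sigma>_distinct:
  assumes "d \<in> H"
  shows "d \<noteq> \<sigma> d" "d \<noteq> \<sigma> (\<sigma> d)" "d \<noteq> \<sigma> (\<sigma> (\<sigma> d))"
    "\<sigma> d \<noteq> \<sigma> (\<sigma> d)" "\<sigma> d \<noteq> \<sigma> (\<sigma> (\<sigma> d))" "\<sigma> (\<sigma> d) \<noteq> \<sigma> (\<sigma> (\<sigma> d))"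
proof -
  have "(\<sigma> ^^ i) d \<noteq> (\<sigma> ^^ j) d" if "i < 4" "j < 4" "i \<noteq> j" for i j
    using sg.funpow_distinct[OF assms, of i j] per4[OF assms] that by auto
  from this[of 0 1] this[of 0 2] this[of 0 3] this[of 1 2] this[of 1 3] this[of 2 3]
  show "d \<noteq> \<sigma> d" "d \<noteq> \<sigma> (\<sigma> d)" "d \<noteq> \<sigma> (\<sigma> (\<sigma> d))"
    "\<sigma> d \<noteq> \<sigma> (\<sigma> d)" "\<sigma> d \<noteq> \<sigma> (\<sigma> (\<sigma> d))" "\<sigma> (\<sigma> d) \<noteq> \<sigma> (\<sigma> (\<sigma> d))"
    by (simp_all add: numeral_eq_Suc)
qed

lemma V_mem: "d \<in> H \<Longrightarrow> x \<in> V d \<Longrightarrow> V x = V d"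
  using sg.orb_mem_eq by blast

lemma V_\<sigma>: "d \<in> H \<Longrightarrow> V (\<sigma> d) = V d"
  using sg.orb_step by blast

lemma V_sub: "d \<in> H \<Longrightarrow> V d \<subseteq> H"
  using sg.orb_subset by blast

lemma F_sub: "d \<in> H \<Longrightarrow> F d \<subseteq> H"
  using ph.orb_subset by blast

lemma F_self: "d \<in> F d" using ph.self_in_orb .
lemma V_self: "d \<in> V d" using sg.self_in_orb .

lemma F_mem: "d \<in> H \<Longrightarrow> x \<in> F d \<Longrightarrow> F x = F d"
  using ph.orb_mem_eq by blast

lemma F_\<sigma>\<alpha>: "d \<in> H \<Longrightarrow> F (\<sigma> (\<alpha> d)) = F d"
  using ph.orb_step[of d] by simp

lemma F_\<alpha>: "d \<in> H \<Longrightarrow> F (\<alpha> d) = F (\<sigma> d)"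
  using F_\<sigma>\<alpha>[of "\<alpha> d"] \<alpha>H \<alpha>\<alpha> by simp

lemma F_eq_iff: "d \<in> H \<Longrightarrow> x \<in> H \<Longrightarrow> x \<in> F d \<longleftrightarrow> F x = F d"
  using F_mem F_self by metis

lemma dregions_eq: "dregions H \<sigma> \<alpha> = F ` H"
  unfolding dregions_def by auto

lemma dvertices_eq: "dvertices H \<sigma> = V ` H"
  unfolding dvertices_def by auto

lemma incident_V_F:
  assumes "d \<in> H" "x \<in> H"
  shows "incident (V d) (F x) \<longleftrightarrow> F x \<in> {F d, F (\<sigma> d), F (\<sigma> (\<sigma> d)), F (\<sigma> (\<sigma> (\<sigma> d)))}"
proof -
  have "incident (V d) (F x) \<longleftrightarrow> (\<exists>y\<in>V d. y \<in> F x)"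
    unfolding incident_def by auto
  also have eq: "\<forall>y\<in>V d. y \<in> F x \<longleftrightarrow> F y = F x"
    using F_eq_iff[OF assms(2)] V_sub[OF assms(1)] by (simp add: subset_iff)
  hence "(\<exists>y\<in>V d. y \<in> F x) \<longleftrightarrow> (\<exists>y\<in>V d. F y = F x)" by simp
  also have "\<dots> \<longleftrightarrow> F x \<in> {F d, F (\<sigma> d), F (\<sigma> (\<sigma> d)), F (\<sigma> (\<sigma> (\<sigma> d)))}"
    unfolding V_eq[OF assms(1)] by auto
  finally show ?thesis .
qed

lemma incident_set:
  assumes "d \<in> H"
  shows "{r \<in> dregions H \<sigma> \<alpha>. incident (V d) r} = {F d, F (\<sigma> d), F (\<sigma> (\<sigma> d)), F (\<sigma> (\<sigma> (\<sigma> d)))}"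
    (is "?L = ?R")
proof
  show "?L \<subseteq> ?R"
  proof
    fix r assume "r \<in> ?L"
    then obtain x where x: "x \<in> H" "r = F x" "incident (V d) (F x)" unfolding dregions_eq by auto
    thus "r \<in> ?R" using incident_V_F[OF assms x(1)] by simp
  qed
next
  have H: "d \<in> H" "\<sigma> d \<in> H" "\<sigma> (\<sigma> d) \<in> H" "\<sigma> (\<sigma> (\<sigma> d)) \<in> H" using assms \<sigma>H by auto
  show "?R \<subseteq> ?L"
  proof
    fix r assume r: "r \<in> ?R"
    then obtain x where x: "x \<in> H" "r = F x" using H by auto
    have "incident (V d) (F x)" using incident_V_F[OF assms x(1)] r x by simp
    thus "r \<in> ?L" using x unfolding dregions_eq by auto
  qed
qed

lemma Vint_eq:
  assumes "d \<in> H" "x \<in> H"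
  shows "V d \<inter> F x = {y \<in> {d, \<sigma> d, \<sigma> (\<sigma> d), \<sigma> (\<sigma> (\<sigma> d))}. F y = F x}"
proof -
  have "\<forall>y\<in>V d. y \<in> F x \<longleftrightarrow> F y = F x"
    using F_eq_iff[OF assms(2)] V_sub[OF assms(1)] by (simp add: subset_iff)
  thus ?thesis unfolding V_eq[OF assms(1)] by auto
qed
end

definition sdiff :: "'a set \<Rightarrow> 'a set \<Rightarrow> 'a set" where
  "sdiff X Y = (X - Y) \<union> (Y - X)"

lemma sdiff_self[simp]: "sdiff X X = {}" unfolding sdiff_def by auto
lemma sdiff_empty[simp]: "sdiff X {} = X" "sdiff {} X = X" unfolding sdiff_def by auto
lemma sdiff_mem: "x \<in> sdiff X Y \<longleftrightarrow> (x \<in> X) \<noteq> (x \<in> Y)" unfolding sdiff_def by auto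
lemma sdiff_assoc: "sdiff (sdiff X Y) Z = sdiff X (sdiff Y Z)" unfolding sdiff_def by auto
lemma sdiff_comm: "sdiff X Y = sdiff Y X" unfolding sdiff_def by auto
lemma sdiff_cancel: "sdiff X (sdiff X Y) = Y" unfolding sdiff_def by auto
lemma sdiff_Int: "sdiff X Y \<inter> W = sdiff (X \<inter> W) (Y \<inter> W)" unfolding sdiff_def by auto

lemma odd_card_sdiff:
  assumes "finite A" "finite B"
  shows "odd (card (sdiff A B)) \<longleftrightarrow> (odd (card A) \<noteq> odd (card B))"
proof -
  have d: "(A - B) \<inter> (B - A) = {}" by auto
  have "card (sdiff A B) = card (A - B) + card (B - A)"
    unfolding sdiff_def using assms d by (simp add: card_Un_disjoint)
  moreover have "card (A - B) = card A - card (A \<inter> B)" using assms by (simp add: card_Diff_subset_Int)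
  moreover have "card (B - A) = card B - card (A \<inter> B)" using assms
    by (simp add: card_Diff_subset_Int Int_commute)
  moreover have "card (A \<inter> B) \<le> card A" "card (A \<inter> B) \<le> card B"
    using assms by (auto intro: card_mono)
  ultimately show ?thesis by auto
qed

lemma card_hom_sets:
  assumes fin: "finite A"
    and cl: "\<And>X Y. X \<in> A \<Longrightarrow> Y \<in> A \<Longrightarrow> sdiff X Y \<in> A"
    and hom: "\<And>X Y. X \<in> A \<Longrightarrow> Y \<in> A \<Longrightarrow> f (sdiff X Y) = sdiff (f X) (f Y)"
  shows "card A = card {X\<in>A. f X = {}} * card (f ` A)"
proof -
  let ?K = "{X\<in>A. f X = {}}"
  let ?fib = "\<lambda>b. {X\<in>A. f X = b}"
  have A_eq: "A = (\<Union>b\<in>f ` A. ?fib b)" by auto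
  have fibcard: "card (?fib b) = card ?K" if b: "b \<in> f ` A" for b
  proof -
    obtain X0 where X0: "X0 \<in> A" "f X0 = b" using b by auto
    have "?fib b = (\<lambda>K. sdiff X0 K) ` ?K"
    proof
      show "?fib b \<subseteq> (\<lambda>K. sdiff X0 K) ` ?K"
      proof
        fix X assume X: "X \<in> ?fib b"
        have "sdiff X0 X \<in> ?K" using X X0 cl hom by auto
        moreover have "X = sdiff X0 (sdiff X0 X)" by (simp add: sdiff_cancel)
        ultimately show "X \<in> (\<lambda>K. sdiff X0 K) ` ?K" by blast
      qed
    next
      show "(\<lambda>K. sdiff X0 K) ` ?K \<subseteq> ?fib b"
        using X0 cl hom by auto
    qed
    moreover have "inj_on (\<lambda>K. sdiff X0 K) ?K"
      by (rule inj_onI) (metis sdiff_cancel)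
    ultimately show ?thesis by (simp add: card_image)
  qed
  have "card A = (\<Sum>b\<in>f ` A. card (?fib b))"
    apply (subst A_eq)
    apply (rule card_UN_disjoint)
    using fin by auto
  also have "\<dots> = (\<Sum>b\<in>f ` A. card ?K)" using fibcard by simp
  finally show ?thesis by simp
qed

lemma even_card_four:
  fixes a b c e :: 'd and pa pb pc pe :: bool
  assumes "a \<noteq> b" "a \<noteq> c" "a \<noteq> e" "b \<noteq> c" "b \<noteq> e" "c \<noteq> e"
    and "P a = (pa \<noteq> pb)" "P b = (pb \<noteq> pc)" "P c = (pc \<noteq> pe)" "P e = (pe \<noteq> pa)"
  shows "even (card {y \<in> {a, b, c, e}. P y})"
proof -
  let ?f = "\<lambda>y. (if P y then 1 else 0) :: nat"
  have "even (sum ?f {a, b, c, e}) \<longleftrightarrow> even (card {y \<in> {a, b, c, e}. odd (?f y)})"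
    by (rule even_sum_iff) simp
  moreover have "{y \<in> {a, b, c, e}. odd (?f y)} = {y \<in> {a, b, c, e}. P y}" by auto
  moreover have "sum ?f {a, b, c, e} = ?f a + ?f b + ?f c + ?f e"
    using assms(1-6) by simp
  moreover have "even (?f a + ?f b + ?f c + ?f e)"
    using assms(7-10) by (cases pa; cases pb; cases pc; cases pe) simp_all
  ultimately show ?thesis by simp
qed

lemma even_subsets_card:
  assumes "finite W" "W \<noteq> {}"
  shows "2 * card {B. B \<subseteq> W \<and> even (card B)} = 2 ^ card W"
proof -
  have e: "card {T. T \<subseteq> W \<and> {} \<subseteq> T \<and> even (card T)} = card {T. T \<subseteq> W \<and> {} \<subseteq> T \<and> odd (card T)}"
    using card_subsupersets_even_odd[of W "{}"] assms by auto
  let ?E = "{B. B \<subseteq> W \<and> even (card B)}" and ?O = "{B. B \<subseteq> W \<and> odd (card B)}"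
  have "Pow W = ?E \<union> ?O" by auto
  moreover have "finite ?E" "finite ?O" using assms(1) by auto
  moreover have "?E \<inter> ?O = {}" by auto
  ultimately have "card (Pow W) = card ?E + card ?O" by (simp add: card_Un_disjoint)
  thus ?thesis using e assms(1) by (simp add: card_Pow)
qed

lemma even_card_involution:
  assumes "finite A" "\<And>x. x \<in> A \<Longrightarrow> g x \<in> A \<and> g x \<noteq> x \<and> g (g x) = x"
  shows "even (card A)"
  using assms
proof (induction "card A" arbitrary: A rule: less_induct)
  case less
  show ?case
  proof (cases "A = {}")
    case True thus ?thesis by simp
  next
    case False
    then obtain x where x: "x \<in> A" by auto
    let ?A' = "A - {x, g x}"
    have gx: "g x \<in> A" "g x \<noteq> x" using less.prems(2)[OF x] by auto
    have c: "card A = card ?A' + 2"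
    proof -
      have "card ?A' = card A - card {x, g x}" using x gx less.prems(1) by (simp add: card_Diff_subset)
      moreover have "card {x, g x} = 2" using gx by simp
      moreover have "card {x, g x} \<le> card A" using x gx less.prems(1) by (intro card_mono) auto
      ultimately show ?thesis by simp
    qed
    have "even (card ?A')"
    proof (rule less.hyps)
      show "card ?A' < card A" using c by simp
      show "finite ?A'" using less.prems(1) by simp
      fix y assume y: "y \<in> ?A'"
      have "g y \<in> A \<and> g y \<noteq> y \<and> g (g y) = y" using y less.prems(2) by auto
      moreover have "g y \<noteq> x" using y less.prems(2)[of y] by auto
      moreover have "g y \<noteq> g x"
      proof
        assume "g y = g x"
        hence "g (g y) = g (g x)" by simp
        hence "y = x" using y less.prems(2)[of y] less.prems(2)[OF x] by auto
        thus False using y by auto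
      qed
      ultimately show "g y \<in> ?A' \<and> g y \<noteq> y \<and> g (g y) = y" by auto
    qed
    thus ?thesis using c by simp
  qed
qed

context KD
begin

definition acl :: "'d set \<Rightarrow> bool" where
  "acl Z \<longleftrightarrow> Z \<subseteq> H \<and> (\<forall>d\<in>Z. \<alpha> d \<in> Z)"

definition evens :: "'d set \<Rightarrow> bool" where
  "evens Z \<longleftrightarrow> acl Z \<and> (\<forall>d\<in>H. even (card (Z \<inter> V d)))"

definition bdF :: "'d set set \<Rightarrow> 'd set" where
  "bdF S = {d \<in> H. (F d \<in> S) \<noteq> (F (\<alpha> d) \<in> S)}"

definition bdV :: "'d set \<Rightarrow> 'd set set" where
  "bdV Z = {w \<in> V ` H. odd (card (Z \<inter> w))}"

lemma acl_sdiff: "acl X \<Longrightarrow> acl Y \<Longrightarrow> acl (sdiff X Y)"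
proof -
  assume X: "acl X" and Y: "acl Y"
  have m: "\<alpha> d \<in> Z \<longleftrightarrow> d \<in> Z" if "acl Z" "d \<in> H" for Z d
    using that \<alpha>\<alpha>[of d] unfolding acl_def by metis
  have "sdiff X Y \<subseteq> H" using X Y unfolding acl_def sdiff_def by blast
  moreover have "\<alpha> d \<in> sdiff X Y" if d: "d \<in> sdiff X Y" for d
  proof -
    have "d \<in> H" using d \<open>sdiff X Y \<subseteq> H\<close> by blast
    thus ?thesis using d m[OF X] m[OF Y] unfolding sdiff_mem by simp
  qed
  ultimately show ?thesis unfolding acl_def by blast
qed

lemma finite_acl: "finite {Z. acl Z}"
proof -
  have "{Z. acl Z} \<subseteq> Pow H" by (auto simp: acl_def)
  thus ?thesis using finH by (meson finite_Pow_iff finite_subset)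
qed

lemma finite_dedges: "finite (dedges H \<alpha>)"
  unfolding dedges_def using finH by simp

lemma card_acl: "card {Z. acl Z} = 2 ^ card (dedges H \<alpha>)"
proof -
  let ?E = "dedges H \<alpha>"
  let ?g = "\<lambda>Z. {e \<in> ?E. e \<subseteq> Z}"
  have "bij_betw ?g {Z. acl Z} (Pow ?E)"
  proof (rule bij_betw_byWitness[where f' = "\<lambda>E. \<Union>E"])
    show "\<forall>Z\<in>{Z. acl Z}. \<Union>(?g Z) = Z"
    proof
      fix Z assume "Z \<in> {Z. acl Z}"
      hence Z: "acl Z" by simp
      show "\<Union>(?g Z) = Z"
      proof
        show "\<Union>(?g Z) \<subseteq> Z" by auto
        show "Z \<subseteq> \<Union>(?g Z)"
        proof
          fix d assume d: "d \<in> Z"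
          hence "{d, \<alpha> d} \<in> ?g Z" using Z unfolding acl_def dedges_def by auto
          thus "d \<in> \<Union>(?g Z)" by blast
        qed
      qed
    qed
    show "\<forall>E\<in>Pow ?E. ?g (\<Union>E) = E"
    proof
      fix E assume E: "E \<in> Pow ?E"
      show "?g (\<Union>E) = E"
      proof
        show "E \<subseteq> ?g (\<Union>E)" using E by auto
        show "?g (\<Union>E) \<subseteq> E"
        proof
          fix e assume e: "e \<in> ?g (\<Union>E)"
          then obtain d where d: "d \<in> H" "e = {d, \<alpha> d}" unfolding dedges_def by auto
          hence "d \<in> \<Union>E" using e by auto
          then obtain e' where e': "e' \<in> E" "d \<in> e'" by auto
          then obtain d' where d': "d' \<in> H" "e' = {d', \<alpha> d'}" using E unfolding dedges_def by auto
          have "e' = e" using d d' e' \<alpha>\<alpha> by auto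
          thus "e \<in> E" using e' by simp
        qed
      qed
    qed
    show "?g ` {Z. acl Z} \<subseteq> Pow ?E" by auto
    show "(\<lambda>E. \<Union>E) ` Pow ?E \<subseteq> {Z. acl Z}"
    proof
      fix Z assume "Z \<in> (\<lambda>E. \<Union>E) ` Pow ?E"
      then obtain E where E: "E \<subseteq> ?E" "Z = \<Union>E" by auto
      have "X \<subseteq> H \<and> (\<forall>d\<in>X. \<alpha> d \<in> X)" if XE: "X \<in> E" for X
      proof -
        obtain d' where "d' \<in> H" "X = {d', \<alpha> d'}" using E XE unfolding dedges_def by auto
        thus ?thesis using \<alpha>H \<alpha>\<alpha> by auto
      qed
      thus "Z \<in> {Z. acl Z}" unfolding acl_def E(2) by blast
    qed
  qed
  hence "card {Z. acl Z} = card (Pow ?E)" by (rule bij_betw_same_card)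
  thus ?thesis using finite_dedges by (simp add: card_Pow)
qed

lemma bdV_hom: "acl X \<Longrightarrow> acl Y \<Longrightarrow> bdV (sdiff X Y) = sdiff (bdV X) (bdV Y)"
proof -
  assume X: "acl X" and Y: "acl Y"
  have "odd (card (sdiff X Y \<inter> w)) \<longleftrightarrow> (odd (card (X \<inter> w)) \<noteq> odd (card (Y \<inter> w)))" for w
  proof -
    have "finite (X \<inter> w)" "finite (Y \<inter> w)" using X Y finH unfolding acl_def
      by (meson finite_Int finite_subset)+
    thus ?thesis unfolding sdiff_Int by (rule odd_card_sdiff)
  qed
  thus ?thesis unfolding bdV_def sdiff_def by auto
qed

lemma bdV_empty: "bdV {} = {}" unfolding bdV_def by simp

lemma mem_V_iff: "x \<in> H \<Longrightarrow> d \<in> H \<Longrightarrow> d \<in> V x \<longleftrightarrow> V x = V d"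
  using V_mem V_self by metis

lemma bdV_edge:
  assumes "d \<in> H" shows "bdV {d, \<alpha> d} = sdiff {V d} {V (\<alpha> d)}"
proof -
  have "odd (card ({d, \<alpha> d} \<inter> w)) \<longleftrightarrow> (w = V d) \<noteq> (w = V (\<alpha> d))" if w: "w \<in> V ` H" for w
  proof -
    obtain x where x: "x \<in> H" "w = V x" using w by auto
    have i1: "d \<in> w \<longleftrightarrow> w = V d" using mem_V_iff[OF x(1) assms] x by auto
    have i2: "\<alpha> d \<in> w \<longleftrightarrow> w = V (\<alpha> d)" using mem_V_iff[OF x(1) \<alpha>H[OF assms]] x by auto
    have ne: "d \<noteq> \<alpha> d" using \<alpha>ne[OF assms] by auto
    show ?thesis
      using ne i1 i2 by (cases "d \<in> w"; cases "\<alpha> d \<in> w") (auto simp: Int_insert_left)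
  qed
  moreover have "V d \<in> V ` H" "V (\<alpha> d) \<in> V ` H" using assms \<alpha>H by auto
  ultimately show ?thesis unfolding bdV_def sdiff_def by auto
qed

lemma acl_edge: "d \<in> H \<Longrightarrow> acl {d, \<alpha> d}"
  unfolding acl_def using \<alpha>H \<alpha>\<alpha> by auto

lemma im_bdV_sdiff: "b1 \<in> bdV ` {Z. acl Z} \<Longrightarrow> b2 \<in> bdV ` {Z. acl Z} \<Longrightarrow> sdiff b1 b2 \<in> bdV ` {Z. acl Z}"
proof -
  assume "b1 \<in> bdV ` {Z. acl Z}" "b2 \<in> bdV ` {Z. acl Z}"
  then obtain Z1 Z2 where "acl Z1" "acl Z2" "b1 = bdV Z1" "b2 = bdV Z2" by auto
  thus ?thesis using bdV_hom acl_sdiff by (metis image_eqI mem_Collect_eq)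
qed

lemma im_bdV_pairs0:
  assumes "d0 \<in> H" "(straight_step \<sigma> \<alpha>)\<^sup>*\<^sup>* d0 d"
  shows "d \<in> H \<and> sdiff {V d0} {V d} \<in> bdV ` {Z. acl Z}"
  using assms(2)
proof (induction rule: rtranclp_induct)
  case base
  have "{} \<in> bdV ` {Z. acl Z}" using bdV_empty by (metis acl_def empty_iff empty_subsetI image_eqI mem_Collect_eq)
  thus ?case using assms(1) by simp
next
  case (step y z)
  hence y: "y \<in> H" by simp
  from step(2) consider "z = \<sigma> (\<sigma> y)" | "z = \<alpha> y" unfolding straight_step_def by auto
  thus ?case
  proof cases
    case 1
    thus ?thesis using step y \<sigma>H V_\<sigma> by simp
  next
    case 2
    have e: "sdiff {V y} {V z} \<in> bdV ` {Z. acl Z}"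
      using bdV_edge[OF y] acl_edge[OF y] 2 by (metis image_eqI mem_Collect_eq)
    have a: "sdiff {V d0} {V y} \<in> bdV ` {Z. acl Z}" using step.IH by simp
    have "sdiff (sdiff {V d0} {V y}) (sdiff {V y} {V z}) \<in> bdV ` {Z. acl Z}"
      using im_bdV_sdiff[OF a e] .
    moreover have "sdiff (sdiff {V d0} {V y}) (sdiff {V y} {V z}) = sdiff {V d0} {V z}"
      by (simp add: sdiff_assoc[symmetric]) (simp add: sdiff_assoc sdiff_cancel)
    ultimately show ?thesis using 2 \<alpha>H[OF y] by simp
  qed
qed

lemma im_bdV_pairs:
  assumes "w1 \<in> V ` H" "w2 \<in> V ` H"
  shows "sdiff {w1} {w2} \<in> bdV ` {Z. acl Z}"
proof -
  obtain d0 where d0: "d0 \<in> H" using neH by auto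
  obtain x1 x2 where x: "x1 \<in> H" "x2 \<in> H" "w1 = V x1" "w2 = V x2" using assms by auto
  have a1: "sdiff {V d0} {w1} \<in> bdV ` {Z. acl Z}"
    using im_bdV_pairs0[OF d0 conn[OF d0 x(1)]] x by simp
  have a2: "sdiff {V d0} {w2} \<in> bdV ` {Z. acl Z}"
    using im_bdV_pairs0[OF d0 conn[OF d0 x(2)]] x by simp
  have "sdiff (sdiff {V d0} {w1}) (sdiff {V d0} {w2}) \<in> bdV ` {Z. acl Z}"
    using im_bdV_sdiff[OF a1 a2] .
  moreover have "sdiff (sdiff {V d0} {w1}) (sdiff {V d0} {w2}) = sdiff {w1} {w2}"
    unfolding sdiff_def by auto
  ultimately show ?thesis by simp
qed

lemma im_bdV_even:
  "B \<subseteq> V ` H \<Longrightarrow> even (card B) \<Longrightarrow> B \<in> bdV ` {Z. acl Z}"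
proof (induction "card B" arbitrary: B rule: less_induct)
  case less
  show ?case
  proof (cases "B = {}")
    case True
    thus ?thesis using bdV_empty by (metis acl_def empty_iff empty_subsetI image_eqI mem_Collect_eq)
  next
    case False
    have finB: "finite B" using less.prems(1) finH by (meson finite_imageI finite_subset)
    obtain w1 where w1: "w1 \<in> B" using False by auto
    have "B - {w1} \<noteq> {}"
    proof
      assume "B - {w1} = {}"
      hence "B = {w1}" using w1 by auto
      thus False using less.prems(2) by simp
    qed
    then obtain w2 where w2: "w2 \<in> B" "w2 \<noteq> w1" by auto
    let ?B' = "B - {w1, w2}"
    have cB: "card ?B' = card B - 2" using w1 w2 finB by (simp add: card_Diff_subset)
    have cB2: "card B \<ge> 2"
    proof -
      have "card {w1, w2} \<le> card B" using w1 w2 finB by (intro card_mono) auto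
      thus ?thesis using w2 by simp
    qed
    have "?B' \<in> bdV ` {Z. acl Z}"
      using less.prems cB cB2 by (intro less.hyps) auto
    moreover have "sdiff {w1} {w2} \<in> bdV ` {Z. acl Z}"
      using w1 w2 less.prems(1) by (intro im_bdV_pairs) auto
    ultimately have "sdiff (sdiff {w1} {w2}) ?B' \<in> bdV ` {Z. acl Z}" by (rule im_bdV_sdiff[rotated])
    moreover have "sdiff (sdiff {w1} {w2}) ?B' = B" using w1 w2 unfolding sdiff_def by auto
    ultimately show ?thesis by simp
  qed
qed

lemma bdV_ker: "acl Z \<Longrightarrow> bdV Z = {} \<longleftrightarrow> evens Z"
  unfolding bdV_def evens_def by auto

lemma card_evens_bound:
  "card {Z. evens Z} * 2 ^ card (V ` H) \<le> 2 * 2 ^ card (dedges H \<alpha>)"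
proof -
  have A: "card {Z. acl Z} = card {Z \<in> {Z. acl Z}. bdV Z = {}} * card (bdV ` {Z. acl Z})"
    by (rule card_hom_sets) (auto simp: finite_acl acl_sdiff bdV_hom)
  have K: "{Z \<in> {Z. acl Z}. bdV Z = {}} = {Z. evens Z}" using bdV_ker evens_def by auto
  have "{B. B \<subseteq> V ` H \<and> even (card B)} \<subseteq> bdV ` {Z. acl Z}" using im_bdV_even by auto
  hence "card {B. B \<subseteq> V ` H \<and> even (card B)} \<le> card (bdV ` {Z. acl Z})"
    by (intro card_mono) (auto intro: finite_imageI finite_acl)
  hence "2 ^ card (V ` H) \<le> 2 * card (bdV ` {Z. acl Z})"
    using even_subsets_card[of "V ` H"] finH neH by simp
  hence "card {Z. evens Z} * 2 ^ card (V ` H) \<le> card {Z. evens Z} * (2 * card (bdV ` {Z. acl Z}))"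
    by simp
  also have "\<dots> = 2 * card {Z. acl Z}" using A K by simp
  finally show ?thesis using card_acl by simp
qed

end

context KD
begin

lemma bdF_acl: "acl (bdF S)"
  unfolding acl_def bdF_def using \<alpha>H \<alpha>\<alpha> by auto

lemma bdF_mem: "d \<in> H \<Longrightarrow> d \<in> bdF S \<longleftrightarrow> (F d \<in> S) \<noteq> (F (\<sigma> d) \<in> S)"
  unfolding bdF_def using F_\<alpha> by simp

lemma bdF_evens: "evens (bdF S)"
  unfolding evens_def
proof (intro conjI ballI bdF_acl)
  fix d assume d: "d \<in> H"
  have H4: "d \<in> H" "\<sigma> d \<in> H" "\<sigma> (\<sigma> d) \<in> H" "\<sigma> (\<sigma> (\<sigma> d)) \<in> H" using d \<sigma>H by auto
  have eq: "bdF S \<inter> V d = {y \<in> {d, \<sigma> d, \<sigma> (\<sigma> d), \<sigma> (\<sigma> (\<sigma> d))}. (F y \<in> S) \<noteq> (F (\<sigma> y) \<in> S)}"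
    unfolding V_eq[OF d] using bdF_mem H4 by auto
  show "even (card (bdF S \<inter> V d))"
    unfolding eq
    by (rule even_card_four[where pa = "F d \<in> S" and pb = "F (\<sigma> d) \<in> S"
          and pc = "F (\<sigma> (\<sigma> d)) \<in> S" and pe = "F (\<sigma> (\<sigma> (\<sigma> d))) \<in> S"])
       (use \<sigma>_distinct[OF d] \<sigma>4[OF d] in auto)
qed

lemma bdF_hom: "bdF (sdiff S S') = sdiff (bdF S) (bdF S')"
  unfolding bdF_def sdiff_def by auto

lemma bdF_zero:
  assumes S: "S \<subseteq> F ` H" and z: "bdF S = {}"
  shows "S = {} \<or> S = F ` H"
proof (cases "S = {}")
  case False
  then obtain x where x: "x \<in> H" "F x \<in> S" using S by auto
  have eqS: "F d \<in> S \<longleftrightarrow> F (\<sigma> d) \<in> S" if "d \<in> H" for d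
    using bdF_mem[OF that, of S] z by auto
  have "y \<in> H \<and> F y \<in> S" if "(straight_step \<sigma> \<alpha>)\<^sup>*\<^sup>* x y" for y
    using that
  proof (induction rule: rtranclp_induct)
    case base show ?case using x by blast
  next
    case (step y z)
    hence y: "y \<in> H" "F y \<in> S" by (auto simp: comp_def)
    from step(2) consider "z = \<sigma> (\<sigma> y)" | "z = \<alpha> y" unfolding straight_step_def by auto
    thus ?case
    proof cases
      case 1
      have "F (\<sigma> y) \<in> S" using eqS[OF y(1)] y by simp
      hence "F (\<sigma> (\<sigma> y)) \<in> S" using eqS[OF \<sigma>H[OF y(1)]] by simp
      thus ?thesis using 1 \<sigma>H y by (simp add: comp_def)
    next
      case 2
      have "F (\<sigma> y) \<in> S" using eqS[OF y(1)] y by simp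
      thus ?thesis using 2 F_\<alpha>[OF y(1)] \<alpha>H[OF y(1)] by (simp add: comp_def)
    qed
  qed
  hence "F ` H \<subseteq> S" using conn[OF x(1)] by auto
  thus ?thesis using S by auto
qed simp

lemma card_imF: "card (Pow (F ` H)) = 2 * card (bdF ` Pow (F ` H))"
proof -
  have "card (Pow (F ` H)) = card {S \<in> Pow (F ` H). bdF S = {}} * card (bdF ` Pow (F ` H))"
    apply (rule card_hom_sets)
    using finH apply simp
     apply (auto simp: sdiff_def)[1]
    by (rule bdF_hom)
  moreover have "{S \<in> Pow (F ` H). bdF S = {}} = {{}, F ` H}"
  proof
    show "{S \<in> Pow (F ` H). bdF S = {}} \<subseteq> {{}, F ` H}" using bdF_zero by auto
    have "bdF {} = {}" "bdF (F ` H) = {}" unfolding bdF_def using \<alpha>H by auto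
    thus "{{}, F ` H} \<subseteq> {S \<in> Pow (F ` H). bdF S = {}}" by auto
  qed
  moreover have "F ` H \<noteq> {}" using neH by auto
  ultimately show ?thesis by simp
qed

lemma plan:
  assumes "evens Z" shows "\<exists>S. Z = bdF S"
proof -
  let ?K = "{Z. evens Z}" and ?I = "bdF ` Pow (F ` H)"
  have sub: "?I \<subseteq> ?K" using bdF_evens by auto
  have finK: "finite ?K" using finite_acl by (rule finite_subset[rotated]) (auto simp: evens_def)
  have eul: "card (V ` H) + card (F ` H) = card (dedges H \<alpha>) + 2"
    using euler unfolding dvertices_eq dregions_eq by linarith
  have b: "card ?K * 2 ^ card (V ` H) \<le> 2 * 2 ^ card (dedges H \<alpha>)" by (rule card_evens_bound)
  have c: "2 ^ card (F ` H) = 2 * card ?I" using card_imF finH by (simp add: card_Pow)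
  have "card ?K * 2 ^ card (V ` H) * 2 ^ card (F ` H) \<le> 2 * 2 ^ card (dedges H \<alpha>) * 2 ^ card (F ` H)"
    using b by simp
  also have "\<dots> = 2 * 2 ^ card (dedges H \<alpha>) * 2 * card ?I" using c by simp
  also have "\<dots> = 2 ^ (card (dedges H \<alpha>) + 2) * card ?I" by (simp add: power_add)
  also have "\<dots> = 2 ^ card (V ` H) * 2 ^ card (F ` H) * card ?I" using eul by (simp flip: power_add)
  finally have "card ?K \<le> card ?I" by simp
  hence "?I = ?K" using sub finK by (intro card_seteq) auto
  thus ?thesis using assms by blast
qed

lemma plan_J:
  assumes "evens Z" "d \<in> H" "F d = F (\<sigma> (\<sigma> d))"
  shows "d \<in> Z \<longleftrightarrow> \<sigma> d \<in> Z"
proof -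
  obtain S where S: "Z = bdF S" using plan[OF assms(1)] by blast
  have m1: "d \<in> bdF S \<longleftrightarrow> (F d \<in> S) \<noteq> (F (\<sigma> d) \<in> S)" by (rule bdF_mem[OF assms(2)])
  have m2: "\<sigma> d \<in> bdF S \<longleftrightarrow> (F (\<sigma> d) \<in> S) \<noteq> (F (\<sigma> (\<sigma> d)) \<in> S)"
    by (rule bdF_mem[OF \<sigma>H[OF assms(2)]])
  show ?thesis unfolding S m1 m2 assms(3)[symmetric] by blast
qed

lemma no_bridge:
  assumes "d \<in> H" shows "F d \<noteq> F (\<sigma> d)"
proof -
  have a: "acl H" unfolding acl_def using \<alpha>H by auto
  have "even (card (H \<inter> V x))" if x: "x \<in> H" for x
  proof -
    have "H \<inter> V x = V x" using V_sub[OF x] by blast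
    thus ?thesis using orb4[OF x] by simp
  qed
  hence e: "evens H" using a unfolding evens_def by blast
  from plan[OF e] obtain S where S: "H = bdF S" ..
  have "d \<in> bdF S" using subst[OF S, of "\<lambda>X. d \<in> X"] assms by simp
  hence "(F d \<in> S) \<noteq> (F (\<sigma> d) \<in> S)" using bdF_mem[OF assms] by simp
  thus ?thesis by metis
qed

end

context KD
begin

definition vstate :: "('d \<Rightarrow> 'd) \<Rightarrow> bool" where
  "vstate p \<longleftrightarrow> (\<forall>d\<in>H. p d \<in> V d \<and> p d \<noteq> d \<and> p (p d) = d)"

definition stp :: "('d \<Rightarrow> 'd) \<Rightarrow> 'd \<Rightarrow> 'd \<Rightarrow> bool" where
  "stp p x y \<longleftrightarrow> y = \<alpha> x \<or> y = p x"

lemma vstate_H: "vstate p \<Longrightarrow> d \<in> H \<Longrightarrow> p d \<in> H"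
  unfolding vstate_def using V_sub by blast

lemma vstate_D: "vstate p \<Longrightarrow> d \<in> H \<Longrightarrow> p d \<in> V d \<and> p d \<noteq> d \<and> p (p d) = d"
  unfolding vstate_def by blast

lemma stp_H:
  assumes "vstate p" "x \<in> H" "(stp p)\<^sup>*\<^sup>* x y" shows "y \<in> H"
  using assms(3) by (induction rule: rtranclp_induct) (auto simp: stp_def \<alpha>H vstate_H[OF assms(1)] assms(2))

lemma stp_sym:
  assumes p: "vstate p" and x: "x \<in> H" and r: "(stp p)\<^sup>*\<^sup>* x y" shows "(stp p)\<^sup>*\<^sup>* y x"
  using r
proof (induction rule: rtranclp_induct)
  case base thus ?case by simp
next
  case (step y z)
  have y: "y \<in> H" using stp_H[OF p x] step by blast
  have "stp p z y" using step(2) y \<alpha>\<alpha> vstate_D[OF p y] unfolding stp_def by auto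
  thus ?case using step by (meson converse_rtranclp_into_rtranclp)
qed

lemma stp_closed:
  assumes "(stp p)\<^sup>*\<^sup>* x y" "x \<in> Z" "\<And>z. z \<in> Z \<Longrightarrow> \<alpha> z \<in> Z \<and> p z \<in> Z"
  shows "y \<in> Z"
  using assms(1,2) by (induction rule: rtranclp_induct) (auto simp: stp_def dest: assms(3))

lemma closed_evens:
  assumes p: "vstate p" and Z: "Z \<subseteq> H" "\<And>z. z \<in> Z \<Longrightarrow> \<alpha> z \<in> Z \<and> p z \<in> Z"
  shows "evens Z"
  unfolding evens_def acl_def
proof (intro conjI ballI)
  show "Z \<subseteq> H" by fact
  fix d assume "d \<in> Z" thus "\<alpha> d \<in> Z" using Z by blast
next
  fix d assume d: "d \<in> H"
  show "even (card (Z \<inter> V d))"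
  proof (rule even_card_involution[where g = p])
    show "finite (Z \<inter> V d)" using finH V_sub[OF d] by (meson finite_Int finite_subset)
    fix x assume x: "x \<in> Z \<inter> V d"
    have xH: "x \<in> H" using x V_sub[OF d] by blast
    have "p x \<in> V x" "p x \<noteq> x" "p (p x) = x" using vstate_D[OF p xH] by auto
    moreover have "V x = V d" using V_mem[OF d] x by blast
    ultimately show "p x \<in> Z \<inter> V d \<and> p x \<noteq> x \<and> p (p x) = x" using Z(2) x by auto
  qed
qed

section \<open>The exterior lemma\<close>

definition extp :: "('d \<Rightarrow> 'd) \<Rightarrow> 'd \<Rightarrow> 'd \<Rightarrow> 'd" where
  "extp p w d = (if d \<in> V w then d else p d)"

definition extQ :: "('d \<Rightarrow> 'd) \<Rightarrow> 'd \<Rightarrow> 'd \<Rightarrow> 'd" where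
  "extQ p w d = extp p w (\<alpha> d)"

lemma extp_H: "vstate p \<Longrightarrow> d \<in> H \<Longrightarrow> extp p w d \<in> H"
  unfolding extp_def using vstate_H by auto

lemma extp_invol: "vstate p \<Longrightarrow> w \<in> H \<Longrightarrow> d \<in> H \<Longrightarrow> extp p w (extp p w d) = d"
proof -
  assume p: "vstate p" and w: "w \<in> H" and d: "d \<in> H"
  show ?thesis
  proof (cases "d \<in> V w")
    case True thus ?thesis unfolding extp_def by simp
  next
    case False
    have "p d \<in> V d" "p (p d) = d" using vstate_D[OF p d] by auto
    moreover have "p d \<notin> V w"
    proof
      assume "p d \<in> V w"
      hence "V (p d) = V w" using V_mem[OF w] by blast
      moreover have "V (p d) = V d" using V_mem[OF d] \<open>p d \<in> V d\<close> by blast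
      ultimately show False using False V_self[of d] by simp
    qed
    ultimately show ?thesis using False unfolding extp_def by simp
  qed
qed

end

locale KDext = KD H \<sigma> \<alpha> for H :: "'d set" and \<sigma> \<alpha> +
  fixes p :: "'d \<Rightarrow> 'd" and w :: 'd
  assumes p: "vstate p" and w: "w \<in> H"
begin

abbreviation "Q \<equiv> extQ p w"
abbreviation "p' \<equiv> extp p w"

lemma Q_H: "d \<in> H \<Longrightarrow> Q d \<in> H"
  unfolding extQ_def using extp_H[OF p] \<alpha>H by blast

lemma Q_inj: "inj_on Q H"
proof (rule inj_onI)
  fix x y assume x: "x \<in> H" and y: "y \<in> H" and e: "Q x = Q y"
  hence "p' (p' (\<alpha> x)) = p' (p' (\<alpha> y))" unfolding extQ_def by simp
  hence "\<alpha> x = \<alpha> y" using extp_invol[OF p w] \<alpha>H x y by simp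
  thus "x = y" using \<alpha>\<alpha> x y by metis
qed

sublocale qo: perm_on H Q
  using finH Q_inj Q_H by unfold_locales auto

lemma Q_inv: "d \<in> H \<Longrightarrow> Q (\<alpha> (p' d)) = d"
  unfolding extQ_def using \<alpha>\<alpha> extp_H[OF p] extp_invol[OF p w] by simp

context
  fixes y assumes y: "y \<in> V w"
begin

lemma yH: "y \<in> H" using y V_sub[OF w] by blast

abbreviation "L \<equiv> per Q y"

lemma L_pos: "0 < L" using qo.per_props(1)[OF yH] .

lemma QL: "(Q ^^ L) y = y" using qo.per_props(2)[OF yH] .

lemma p'y: "p' y = y" unfolding extp_def using y by simp

lemma QjH: "(Q ^^ j) y \<in> H" using qo.in_H[OF yH] .

lemma A_alpha: "j < L \<Longrightarrow> \<alpha> ((Q ^^ j) y) = (Q ^^ (L - j - 1)) y"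
proof (induction j)
  case 0
  have "Q (\<alpha> y) = y" using Q_inv[OF yH] p'y by simp
  moreover have "Q ((Q ^^ (L - 1)) y) = y"
  proof -
    have "L = Suc (L - 1)" using L_pos by simp
    hence "(Q ^^ L) y = Q ((Q ^^ (L - 1)) y)" by (metis funpow.simps(2) comp_apply)
    thus ?thesis using QL by simp
  qed
  ultimately have eq: "Q (\<alpha> y) = Q ((Q ^^ (L - 1)) y)" by simp
  show ?case using inj_onD[OF Q_inj eq \<alpha>H[OF yH] QjH] by simp
next
  case (Suc j)
  have IH: "\<alpha> ((Q ^^ j) y) = (Q ^^ (L - j - 1)) y" using Suc by simp
  have z: "(Q ^^ Suc j) y = p' (\<alpha> ((Q ^^ j) y))" by (simp add: extQ_def)
  have Qa: "Q (\<alpha> z) = p' z" if "z \<in> H" for z unfolding extQ_def using \<alpha>\<alpha> that by simp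
  have "Q (\<alpha> ((Q ^^ Suc j) y)) = p' ((Q ^^ Suc j) y)" by (rule Qa[OF QjH])
  also have "\<dots> = \<alpha> ((Q ^^ j) y)"
    unfolding z using extp_invol[OF p w] \<alpha>H QjH by simp
  also have "\<dots> = (Q ^^ (L - j - 1)) y" by (rule IH)
  also have "\<dots> = Q ((Q ^^ (L - Suc j - 1)) y)"
  proof -
    have "L - j - 1 = Suc (L - Suc j - 1)" using Suc.prems by simp
    thus ?thesis by simp
  qed
  finally have eq: "Q (\<alpha> ((Q ^^ Suc j) y)) = Q ((Q ^^ (L - Suc j - 1)) y)" .
  show ?case using inj_onD[OF Q_inj eq \<alpha>H[OF QjH] QjH] .
qed

lemma B_p: "0 < j \<Longrightarrow> j \<le> L \<Longrightarrow> p' ((Q ^^ j) y) = (Q ^^ (L - j)) y"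
proof -
  assume j: "0 < j" "j \<le> L"
  obtain i where i: "j = Suc i" using j by (cases j) auto
  have "(Q ^^ j) y = p' (\<alpha> ((Q ^^ i) y))" unfolding i by (simp add: extQ_def)
  hence "p' ((Q ^^ j) y) = \<alpha> ((Q ^^ i) y)" using extp_invol[OF p w] \<alpha>H QjH by simp
  also have "\<dots> = (Q ^^ (L - i - 1)) y" using A_alpha i j by simp
  finally show ?thesis using i by simp
qed

lemma X_eq: "orb Q y = (\<lambda>i. (Q ^^ i) y) ` {..<L}"
  using qo.orb_eq[OF yH] .

lemma X_alpha: "x \<in> orb Q y \<Longrightarrow> \<alpha> x \<in> orb Q y"
  unfolding X_eq using A_alpha by auto

lemma X_p': "x \<in> orb Q y \<Longrightarrow> p' x \<in> orb Q y"
proof -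
  assume "x \<in> orb Q y"
  then obtain j where j: "j < L" "x = (Q ^^ j) y" unfolding X_eq by auto
  show ?thesis
  proof (cases "j = 0")
    case True thus ?thesis using j p'y qo.self_in_orb by simp
  next
    case False
    hence "p' x = (Q ^^ (L - j)) y" using B_p j by simp
    thus ?thesis by (simp add: qo.funpow_in_orb)
  qed
qed

lemma L_even: "even L"
proof (rule ccontr)
  assume "odd L"
  then obtain m where m: "L = 2 * m + 1" by (metis oddE)
  have "\<alpha> ((Q ^^ m) y) = (Q ^^ m) y" using A_alpha[of m] m by simp
  thus False using \<alpha>ne QjH by blast
qed

abbreviation "y2 \<equiv> (Q ^^ (L div 2)) y"

lemma y2_ne: "y2 \<noteq> y"
proof
  assume "y2 = y"
  hence "(Q ^^ (L div 2)) y = (Q ^^ 0) y" by simp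
  hence "L div 2 = 0" using qo.funpow_distinct[OF yH, of "L div 2" 0] L_pos by simp
  thus False using L_even L_pos by auto
qed

lemma y2_in: "y2 \<in> V w"
proof (rule ccontr)
  assume n: "y2 \<notin> V w"
  have h: "0 < L div 2" using L_even L_pos by (auto elim: evenE)
  have "p' y2 = (Q ^^ (L - L div 2)) y" using B_p[of "L div 2"] h by simp
  also have "L - L div 2 = L div 2" using L_even by auto
  finally have "p y2 = y2" using n unfolding extp_def by simp
  thus False using vstate_D[OF p QjH] by simp
qed

lemma X_V: "orb Q y \<inter> V w = {y, y2}"
proof
  show "{y, y2} \<subseteq> orb Q y \<inter> V w"
    using y y2_in qo.self_in_orb qo.funpow_in_orb by auto
  show "orb Q y \<inter> V w \<subseteq> {y, y2}"
  proof
    fix x assume x: "x \<in> orb Q y \<inter> V w"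
    then obtain j where j: "j < L" "x = (Q ^^ j) y" unfolding X_eq by auto
    show "x \<in> {y, y2}"
    proof (cases "j = 0")
      case True thus ?thesis using j by simp
    next
      case False
      have "p' x = x" using x unfolding extp_def by simp
      hence "(Q ^^ (L - j)) y = (Q ^^ j) y" using B_p[of j] False j by simp
      hence "L - j = j" using qo.funpow_distinct[OF yH, of "L - j" j] j False by simp
      hence "j = L div 2" by auto
      thus ?thesis using j by simp
    qed
  qed
qed

lemma X_reach:
  assumes "\<And>d. d \<in> H \<Longrightarrow> d \<notin> V w \<Longrightarrow> p2 d = p d"
  shows "(stp p2)\<^sup>*\<^sup>* y ((Q ^^ i) y)"
proof (induction i)
  case 0 thus ?case by simp
next
  case (Suc i)
  let ?z = "(Q ^^ i) y"
  have a: "stp p2 ?z (\<alpha> ?z)" unfolding stp_def by simp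
  have "(stp p2)\<^sup>*\<^sup>* (\<alpha> ?z) (Q ?z)"
  proof (cases "\<alpha> ?z \<in> V w")
    case True
    have "Q ?z = p' (\<alpha> ?z)" by (rule extQ_def)
    also have "\<dots> = \<alpha> ?z" unfolding extp_def[of p w "\<alpha> ?z"] using True by simp
    finally show ?thesis by simp
  next
    case False
    have e1: "Q ?z = p' (\<alpha> ?z)" by (rule extQ_def)
    have e2: "p' (\<alpha> ?z) = p (\<alpha> ?z)" unfolding extp_def[of p w "\<alpha> ?z"] using False by simp
    have e3: "p2 (\<alpha> ?z) = p (\<alpha> ?z)" using assms \<alpha>H[OF QjH] False by blast
    have "Q ?z = p2 (\<alpha> ?z)" using e1 e2 e3 by simp
    thus ?thesis unfolding stp_def by auto
  qed
  thus ?case using Suc a by simp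
qed

lemma X_reach_all:
  assumes "\<And>d. d \<in> H \<Longrightarrow> d \<notin> V w \<Longrightarrow> p2 d = p d" "x \<in> orb Q y"
  shows "(stp p2)\<^sup>*\<^sup>* y x"
  using assms(2) X_reach[OF assms(1)] unfolding orb_def by auto

end

end

context KDext
begin

lemma ext_evens:
  assumes y: "y \<in> V w" shows "evens (orb Q y)"
  unfolding evens_def acl_def
proof (intro conjI ballI)
  show "orb Q y \<subseteq> H" using qo.orb_subset yH[OF y] by blast
  fix d assume "d \<in> orb Q y" thus "\<alpha> d \<in> orb Q y" using X_alpha[OF y] by blast
next
  fix x assume x: "x \<in> H"
  show "even (card (orb Q y \<inter> V x))"
  proof (cases "V x = V w")
    case True
    hence "orb Q y \<inter> V x = {y, y2 y}" using X_V[OF y] by simp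
    thus ?thesis using y2_ne[OF y] by simp
  next
    case False
    show ?thesis
    proof (rule even_card_involution[where g = p])
      show "finite (orb Q y \<inter> V x)" using finH V_sub[OF x] by (meson finite_Int finite_subset)
      fix z assume z: "z \<in> orb Q y \<inter> V x"
      have zH: "z \<in> H" using z V_sub[OF x] by blast
      have Vz: "V z = V x" using V_mem[OF x] z by blast
      have "z \<notin> V w"
      proof
        assume "z \<in> V w" hence "V z = V w" using V_mem[OF w] by blast
        thus False using Vz False by simp
      qed
      hence eqp: "p' z = p z" unfolding extp_def by simp
      have "p' z \<in> orb Q y" using X_p'[OF y] z by blast
      hence "p z \<in> orb Q y" using eqp by simp
      moreover have "p z \<in> V z" "p z \<noteq> z" "p (p z) = z" using vstate_D[OF p zH] by auto
      ultimately show "p z \<in> orb Q y \<inter> V x \<and> p z \<noteq> z \<and> p (p z) = z" using Vz by auto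
    qed
  qed
qed

end

context KD
begin

definition irr :: "'d \<Rightarrow> bool" where
  "irr d \<longleftrightarrow> F d \<noteq> F (\<sigma> (\<sigma> d)) \<and> F (\<sigma> d) \<noteq> F (\<sigma> (\<sigma> (\<sigma> d)))"

lemma irr_\<sigma>: "d \<in> H \<Longrightarrow> irr (\<sigma> d) \<longleftrightarrow> irr d"
  unfolding irr_def using \<sigma>4 by auto

lemma irr_V: "d \<in> H \<Longrightarrow> x \<in> V d \<Longrightarrow> irr x \<longleftrightarrow> irr d"
  using V_eq[of d] irr_\<sigma> \<sigma>H by auto

lemma straight_vstate: "vstate (\<lambda>x. \<sigma> (\<sigma> x))"
  unfolding vstate_def
proof
  fix d assume d: "d \<in> H"
  show "\<sigma> (\<sigma> d) \<in> V d \<and> \<sigma> (\<sigma> d) \<noteq> d \<and> \<sigma> (\<sigma> (\<sigma> (\<sigma> d))) = d"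
    using V_eq[OF d] \<sigma>_distinct(2)[OF d] \<sigma>4[OF d] by auto
qed

lemma no_double:
  assumes d: "d \<in> H" and c1: "F (\<sigma> (\<sigma> d)) = F d" shows "F (\<sigma> (\<sigma> (\<sigma> d))) \<noteq> F (\<sigma> d)"
proof
  assume c2: "F (\<sigma> (\<sigma> (\<sigma> d))) = F (\<sigma> d)"
  interpret E: KDext H \<sigma> \<alpha> "\<lambda>x. \<sigma> (\<sigma> x)" d
    using straight_vstate d by unfold_locales auto
  have dV: "d \<in> V d" by (rule V_self)
  let ?X = "orb E.Q d"
  have ev: "evens ?X" by (rule E.ext_evens[OF dV])
  have XV: "?X \<inter> V d = {d, E.y2 d}" by (rule E.X_V[OF dV])
  have "d \<in> ?X" by (rule E.qo.self_in_orb)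
  hence s1: "\<sigma> d \<in> ?X" using plan_J[OF ev d] c1 by simp
  have s1H: "\<sigma> d \<in> H" using \<sigma>H[OF d] .
  have "F (\<sigma> d) = F (\<sigma> (\<sigma> (\<sigma> d)))" using c2 by simp
  hence s2: "\<sigma> (\<sigma> d) \<in> ?X" using plan_J[OF ev s1H] s1 by simp
  have "\<sigma> d \<in> V d" "\<sigma> (\<sigma> d) \<in> V d" using V_eq[OF d] by auto
  hence "\<sigma> d \<in> {d, E.y2 d}" "\<sigma> (\<sigma> d) \<in> {d, E.y2 d}" using s1 s2 XV by blast+
  thus False using \<sigma>_distinct[OF d] by auto
qed

definition hp :: "'d \<Rightarrow> 'd" where
  "hp d = (if F (\<sigma> (\<sigma> d)) = F d then \<sigma> d else \<sigma> (\<sigma> (\<sigma> d)))"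

lemma notirr: "d \<in> H \<Longrightarrow> \<not> irr d \<Longrightarrow> F (\<sigma> (\<sigma> d)) \<noteq> F d \<Longrightarrow> F (\<sigma> (\<sigma> (\<sigma> d))) = F (\<sigma> d)"
  unfolding irr_def by auto

lemma hp_props:
  assumes d: "d \<in> H" and r: "\<not> irr d"
  shows "hp d \<in> V d" "hp d \<noteq> d" "hp (hp d) = d"
proof -
  show "hp d \<in> V d" unfolding hp_def using V_eq[OF d] by auto
  show "hp d \<noteq> d" unfolding hp_def using \<sigma>_distinct[OF d] by auto
  show "hp (hp d) = d"
  proof (cases "F (\<sigma> (\<sigma> d)) = F d")
    case True
    have "F (\<sigma> (\<sigma> (\<sigma> d))) \<noteq> F (\<sigma> d)" by (rule no_double[OF d True])
    thus ?thesis unfolding hp_def using True \<sigma>4[OF d] by simp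
  next
    case False
    have c: "F (\<sigma> (\<sigma> (\<sigma> d))) = F (\<sigma> d)" by (rule notirr[OF d r False])
    have "F (\<sigma> (\<sigma> (\<sigma> (\<sigma> (\<sigma> d))))) = F (\<sigma> (\<sigma> (\<sigma> d)))"
      using \<sigma>4[OF d] c by simp
    thus ?thesis unfolding hp_def using False \<sigma>4[OF d] by simp
  qed
qed

lemma J_hp:
  assumes Z: "evens Z" and d: "d \<in> H" and r: "\<not> irr d" and dZ: "d \<in> Z"
  shows "hp d \<in> Z"
proof (cases "F (\<sigma> (\<sigma> d)) = F d")
  case True
  hence "\<sigma> d \<in> Z" using plan_J[OF Z d] dZ by simp
  thus ?thesis unfolding hp_def using True by simp
next
  case False
  have c: "F (\<sigma> (\<sigma> (\<sigma> d))) = F (\<sigma> d)" by (rule notirr[OF d r False])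
  have d3: "\<sigma> (\<sigma> (\<sigma> d)) \<in> H" using d \<sigma>H by simp
  have "F (\<sigma> (\<sigma> (\<sigma> d))) = F (\<sigma> (\<sigma> (\<sigma> (\<sigma> (\<sigma> d)))))" using c \<sigma>4[OF d] by simp
  hence "\<sigma> (\<sigma> (\<sigma> d)) \<in> Z \<longleftrightarrow> \<sigma> (\<sigma> (\<sigma> (\<sigma> d))) \<in> Z" by (rule plan_J[OF Z d3])
  hence "\<sigma> (\<sigma> (\<sigma> d)) \<in> Z" using dZ \<sigma>4[OF d] by simp
  thus ?thesis unfolding hp_def using False by simp
qed

definition Red :: "'d set set" where
  "Red = {V x | x. x \<in> H \<and> \<not> irr x}"

definition pT :: "'d set set \<Rightarrow> 'd \<Rightarrow> 'd" where
  "pT T d = (if V d \<in> T then hp d else \<sigma> (\<sigma> d))"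

lemma Red_irr: "d \<in> H \<Longrightarrow> V d \<in> Red \<Longrightarrow> \<not> irr d"
proof -
  assume d: "d \<in> H" and "V d \<in> Red"
  then obtain x where x: "x \<in> H" "\<not> irr x" "V d = V x" unfolding Red_def by blast
  have "x \<in> V d" using x(3) V_self[of x] by simp
  thus ?thesis using irr_V[OF d] x(2) by blast
qed

lemma pT_vstate: "T \<subseteq> Red \<Longrightarrow> vstate (pT T)"
  unfolding vstate_def
proof
  fix d assume T: "T \<subseteq> Red" and d: "d \<in> H"
  show "pT T d \<in> V d \<and> pT T d \<noteq> d \<and> pT T (pT T d) = d"
  proof (cases "V d \<in> T")
    case True
    have r: "\<not> irr d" using Red_irr[OF d] T True by blast
    have "V (hp d) = V d" using V_mem[OF d] hp_props(1)[OF d r] by blast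
    thus ?thesis unfolding pT_def using True hp_props[OF d r] by simp
  next
    case False
    have "V (\<sigma> (\<sigma> d)) = V d" using V_\<sigma>[OF \<sigma>H[OF d]] V_\<sigma>[OF d] by simp
    thus ?thesis unfolding pT_def using False V_eq[OF d] \<sigma>_distinct[OF d] \<sigma>4[OF d] by simp
  qed
qed

lemma finite_Red: "finite Red"
proof -
  have "Red \<subseteq> V ` H" unfolding Red_def by auto
  thus ?thesis using finH finite_subset by blast
qed

lemma mem_V_iff2: "d \<in> H \<Longrightarrow> x \<in> H \<Longrightarrow> d \<in> V x \<longleftrightarrow> V d = V x"
  using V_mem V_self by metis

end

context KD
begin

lemma first_touch:
  assumes vp: "vstate p" and a: "a \<in> H" and agree: "\<And>d. d \<in> H \<Longrightarrow> d \<notin> U \<Longrightarrow> p1 d = p d"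
    and r: "(stp p)\<^sup>*\<^sup>* a x"
  shows "(stp p1)\<^sup>*\<^sup>* a x \<or> (\<exists>h\<in>U. (stp p1)\<^sup>*\<^sup>* a h)"
  using r
proof (induction rule: rtranclp_induct)
  case base thus ?case by simp
next
  case (step x z)
  have xH: "x \<in> H" using stp_H[OF vp a step(1)] .
  show ?case
  proof (cases "(stp p1)\<^sup>*\<^sup>* a x")
    case True
    show ?thesis
    proof (cases "x \<in> U")
      case True thus ?thesis using \<open>(stp p1)\<^sup>*\<^sup>* a x\<close> by blast
    next
      case False
      have "stp p1 x z" using step(2) agree[OF xH False] unfolding stp_def by auto
      thus ?thesis using True by (meson rtranclp.rtrancl_into_rtrancl)
    qed
  next
    case False thus ?thesis using step.IH by blast
  qed
qed

lemma U_step: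
  assumes T: "T \<subseteq> Red" and u: "u \<in> Red" "u \<notin> T"
    and IHT: "\<And>e. e \<in> H \<Longrightarrow> irr e \<Longrightarrow> (stp (pT T))\<^sup>*\<^sup>* e (\<sigma> e)"
    and e: "e \<in> H" "irr e"
    and nr: "\<not> (stp (pT (insert u T)))\<^sup>*\<^sup>* e (\<sigma> e)"
  shows False
proof -
  define p where "p = pT T"
  define p1 where "p1 = pT (insert u T)"
  have vp: "vstate p" unfolding p_def using pT_vstate T by blast
  have vp1: "vstate p1" unfolding p1_def using pT_vstate T u by blast
  obtain hu where hu: "hu \<in> H" "\<not> irr hu" "u = V hu" using u unfolding Red_def by blast
  have inu: "d \<in> u \<longleftrightarrow> V d = u" if "d \<in> H" for d
    using mem_V_iff2[OF that hu(1)] hu(3) by simp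
  have agree: "p1 d = p d" if "d \<in> H" "d \<notin> u" for d
    using that inu unfolding p1_def p_def pT_def by simp
  have p1u: "p1 d = hp d" if "d \<in> H" "d \<in> u" for d
    using that inu unfolding p1_def pT_def by simp
  have Ve: "V e \<notin> insert u T" using Red_irr[OF e(1)] e(2) T u by blast
  have p1e: "p1 d = \<sigma> (\<sigma> d)" if "d \<in> V e" for d
  proof -
    have "d \<in> H" using that V_sub[OF e(1)] by blast
    hence "V d = V e" using V_mem[OF e(1)] that by blast
    thus ?thesis unfolding p1_def pT_def using Ve by simp
  qed
  have eu: "x \<notin> u" if "x \<in> V e" for x
  proof
    assume "x \<in> u"
    have xH: "x \<in> H" using that V_sub[OF e(1)] by blast
    have "V x = u" using inu[OF xH] \<open>x \<in> u\<close> by simp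
    moreover have "V x = V e" using V_mem[OF e(1)] that by blast
    ultimately show False using Ve by simp
  qed
  have \<sigma>eH: "\<sigma> e \<in> H" using \<sigma>H[OF e(1)] .
  have sym1: "(stp p1)\<^sup>*\<^sup>* y x" if "(stp p1)\<^sup>*\<^sup>* x y" "x \<in> H" for x y
    using stp_sym[OF vp1 that(2) that(1)] .
  have bad: False if "(stp p1)\<^sup>*\<^sup>* e z" "(stp p1)\<^sup>*\<^sup>* (\<sigma> e) z" for z
  proof -
    have "(stp p1)\<^sup>*\<^sup>* z (\<sigma> e)" using sym1[OF that(2) \<sigma>eH] .
    hence "(stp p1)\<^sup>*\<^sup>* e (\<sigma> e)" using that(1) by simp
    thus False using nr p1_def by simp
  qed
  have r0: "(stp p)\<^sup>*\<^sup>* e (\<sigma> e)" using IHT[OF e] p_def by simp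
  from first_touch[OF vp e(1) agree r0]
  obtain h1 where h1: "h1 \<in> u" "(stp p1)\<^sup>*\<^sup>* e h1" using nr p1_def by blast
  have r0': "(stp p)\<^sup>*\<^sup>* (\<sigma> e) e" using stp_sym[OF vp e(1) r0] .
  have ft2: "(stp p1)\<^sup>*\<^sup>* (\<sigma> e) e \<or> (\<exists>h\<in>u. (stp p1)\<^sup>*\<^sup>* (\<sigma> e) h)"
    by (rule first_touch[OF vp \<sigma>eH agree r0'])
  have "\<not> (stp p1)\<^sup>*\<^sup>* (\<sigma> e) e" using bad[of e] by blast
  hence "\<exists>h\<in>u. (stp p1)\<^sup>*\<^sup>* (\<sigma> e) h" using ft2 by blast
  then obtain h2 where h2: "h2 \<in> u" "(stp p1)\<^sup>*\<^sup>* (\<sigma> e) h2" by blast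
  have uH: "u \<subseteq> H" using V_sub[OF hu(1)] hu(3) by simp
  have h1H: "h1 \<in> H" using h1(1) uH by blast
  have h2H: "h2 \<in> H" using h2(1) uH by blast
  have nirr: "\<not> irr x" if "x \<in> u" for x
  proof -
    have "x \<in> V hu" using that hu(3) by simp
    thus ?thesis using irr_V[OF hu(1), of x] hu(2) by simp
  qed
  have "stp p1 h1 (hp h1)" unfolding stp_def using p1u[OF h1H h1(1)] by simp
  hence hp1: "(stp p1)\<^sup>*\<^sup>* e (hp h1)" using h1(2) by (rule rtranclp.rtrancl_into_rtrancl[rotated])
  have "stp p1 h2 (hp h2)" unfolding stp_def using p1u[OF h2H h2(1)] by simp
  hence hp2: "(stp p1)\<^sup>*\<^sup>* (\<sigma> e) (hp h2)" using h2(2) by (rule rtranclp.rtrancl_into_rtrancl[rotated])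
  have d1: "h2 \<noteq> h1"
  proof assume "h2 = h1" thus False using bad[OF h1(2)] h2(2) by simp qed
  have d2: "h2 \<noteq> hp h1"
  proof assume "h2 = hp h1" thus False using bad[OF hp1] h2(2) by simp qed
  have d3: "hp h2 \<noteq> h1"
  proof assume "hp h2 = h1" thus False using bad[OF h1(2)] hp2 by simp qed
  have d4: "hp h2 \<noteq> hp h1"
  proof assume "hp h2 = hp h1" thus False using bad[OF hp1] hp2 by simp qed
  have d5: "hp h1 \<noteq> h1" using hp_props(2)[OF h1H nirr[OF h1(1)]] .
  have d6: "hp h2 \<noteq> h2" using hp_props(2)[OF h2H nirr[OF h2(1)]] .
  have "V h1 = u" using inu[OF h1H] h1(1) by simp
  hence hpu1: "hp h1 \<in> u" using hp_props(1)[OF h1H nirr[OF h1(1)]] by simp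
  have "V h2 = u" using inu[OF h2H] h2(1) by simp
  hence hpu2: "hp h2 \<in> u" using hp_props(1)[OF h2H nirr[OF h2(1)]] by simp
  have u4: "u = {h1, hp h1, h2, hp h2}"
  proof -
    have sub: "{h1, hp h1, h2, hp h2} \<subseteq> u" using h1 h2 hpu1 hpu2 by auto
    have c4: "card {h1, hp h1, h2, hp h2} = 4" using d1 d2 d3 d4 d5 d6 by auto
    have cu: "card u = 4" using orb4[OF hu(1)] hu(3) by simp
    have "finite u" using uH finH by (rule finite_subset)
    thus ?thesis using card_seteq[OF _ sub] sub c4 cu by simp
  qed
  interpret E1: KDext H \<sigma> \<alpha> p1 e using vp1 e(1) by unfold_locales auto
  have eV: "e \<in> V e" by (rule V_self)
  let ?y2 = "E1.y2 e"
  have y2V: "?y2 \<in> V e" using E1.y2_in[OF eV] .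
  have y2ne: "?y2 \<noteq> e" using E1.y2_ne[OF eV] .
  have y2r: "(stp p1)\<^sup>*\<^sup>* e ?y2" using E1.X_reach[OF eV, of p1] by blast
  have y2s: "?y2 = \<sigma> (\<sigma> e)"
  proof -
    have "?y2 \<in> {\<sigma> e, \<sigma> (\<sigma> e), \<sigma> (\<sigma> (\<sigma> e))}" using y2V y2ne V_eq[OF e(1)] by auto
    moreover have "?y2 \<noteq> \<sigma> e" using y2r nr p1_def by auto
    moreover have "?y2 \<noteq> \<sigma> (\<sigma> (\<sigma> e))"
    proof
      assume a: "?y2 = \<sigma> (\<sigma> (\<sigma> e))"
      have "\<sigma> (\<sigma> (\<sigma> e)) \<in> V e" using V_eq[OF e(1)] by auto
      hence "p1 (\<sigma> (\<sigma> (\<sigma> e))) = \<sigma> e" using p1e \<sigma>4[OF \<sigma>eH] by simp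
      hence "stp p1 (\<sigma> (\<sigma> (\<sigma> e))) (\<sigma> e)" unfolding stp_def by simp
      hence "(stp p1)\<^sup>*\<^sup>* e (\<sigma> e)" using y2r a by (metis rtranclp.rtrancl_into_rtrancl)
      thus False using nr p1_def by simp
    qed
    ultimately show ?thesis by blast
  qed
  define \<tau> where "\<tau> d = (if d = e then \<sigma> e else if d = \<sigma> e then e
      else if d = \<sigma> (\<sigma> e) then \<sigma> (\<sigma> (\<sigma> e)) else \<sigma> (\<sigma> e))" for d
  define p2 where "p2 d = (if d \<in> V e then \<tau> d else p1 d)" for d
  have dist: "e \<noteq> \<sigma> e" "e \<noteq> \<sigma> (\<sigma> e)" "e \<noteq> \<sigma> (\<sigma> (\<sigma> e))" "\<sigma> e \<noteq> \<sigma> (\<sigma> e)"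
    "\<sigma> e \<noteq> \<sigma> (\<sigma> (\<sigma> e))" "\<sigma> (\<sigma> e) \<noteq> \<sigma> (\<sigma> (\<sigma> e))" using \<sigma>_distinct[OF e(1)] by auto
  have vp2: "vstate p2"
    unfolding vstate_def
  proof
    fix d assume d: "d \<in> H"
    show "p2 d \<in> V d \<and> p2 d \<noteq> d \<and> p2 (p2 d) = d"
    proof (cases "d \<in> V e")
      case True
      hence Vd: "V d = V e" using V_mem[OF e(1)] by blast
      have "d = e \<or> d = \<sigma> e \<or> d = \<sigma> (\<sigma> e) \<or> d = \<sigma> (\<sigma> (\<sigma> e))" using True V_eq[OF e(1)] by auto
      thus ?thesis unfolding p2_def \<tau>_def using Vd V_eq[OF e(1)] dist by auto
    next
      case False
      have q: "p1 d \<in> V d" "p1 d \<noteq> d" "p1 (p1 d) = d" using vstate_D[OF vp1 d] by auto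
      have "p1 d \<notin> V e"
      proof
        assume "p1 d \<in> V e"
        hence "V (p1 d) = V e" using V_mem[OF e(1)] by blast
        moreover have "V (p1 d) = V d" using V_mem[OF d] q(1) by blast
        ultimately show False using False V_self[of d] by simp
      qed
      thus ?thesis unfolding p2_def using False q by simp
    qed
  qed
  have agree2: "p2 d = p1 d" if "d \<notin> V e" for d using that unfolding p2_def by simp
  have RV: "(stp p2)\<^sup>*\<^sup>* e x" if "x \<in> V e" for x
  proof -
    have eV2: "e \<in> V e" "\<sigma> e \<in> V e" "\<sigma> (\<sigma> e) \<in> V e" using V_eq[OF e(1)] by auto
    have a1: "(stp p2)\<^sup>*\<^sup>* e (\<sigma> e)"
      using eV2 unfolding stp_def p2_def \<tau>_def by (intro r_into_rtranclp) simp
    have a2: "(stp p2)\<^sup>*\<^sup>* e (\<sigma> (\<sigma> e))"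
      using E1.X_reach[OF eV, of p2 "per E1.Q e div 2"] agree2 y2s by simp
    have a3: "(stp p2)\<^sup>*\<^sup>* e (\<sigma> (\<sigma> (\<sigma> e)))"
    proof -
      have "stp p2 (\<sigma> (\<sigma> e)) (\<sigma> (\<sigma> (\<sigma> e)))" unfolding stp_def p2_def \<tau>_def using eV2 dist by simp
      thus ?thesis using a2 by (metis rtranclp.rtrancl_into_rtrancl)
    qed
    show ?thesis using that V_eq[OF e(1)] a1 a2 a3 by auto
  qed
  have transfer: "(stp p2)\<^sup>*\<^sup>* e x" if "(stp p1)\<^sup>*\<^sup>* a x" "a \<in> V e" for a x
    using that(1)
  proof (induction rule: rtranclp_induct)
    case base thus ?case using RV that(2) by simp
  next
    case (step x z)
    have aH: "a \<in> H" using that(2) V_sub[OF e(1)] by blast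
    have xH: "x \<in> H" using stp_H[OF vp1 aH step(1)] .
    show ?case
    proof (cases "x \<in> V e")
      case True
      have "z = \<alpha> x \<or> z \<in> V e"
      proof -
        have "z = \<alpha> x \<or> z = p1 x" using step(2) unfolding stp_def by auto
        moreover have "p1 x \<in> V e"
          using p1e[OF True] True V_mem[OF e(1)] V_eq[OF xH] by auto
        ultimately show ?thesis by blast
      qed
      thus ?thesis
      proof
        assume "z = \<alpha> x"
        hence "stp p2 x z" unfolding stp_def by simp
        thus ?thesis using step.IH by (metis rtranclp.rtrancl_into_rtrancl)
      qed (rule RV)
    next
      case False
      have "stp p2 x z" using step(2) agree2[OF False] unfolding stp_def by auto
      thus ?thesis using step.IH by (metis rtranclp.rtrancl_into_rtrancl)
    qed
  qed
  have \<sigma>eV: "\<sigma> e \<in> V e" using V_eq[OF e(1)] by auto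
  have R2: "(stp p2)\<^sup>*\<^sup>* e x" if "x \<in> u" for x
  proof -
    have "x = h1 \<or> x = hp h1 \<or> x = h2 \<or> x = hp h2" using that u4 by auto
    thus ?thesis using transfer[OF h1(2) eV] transfer[OF hp1 eV] transfer[OF h2(2) \<sigma>eV]
        transfer[OF hp2 \<sigma>eV] by auto
  qed
  interpret E2: KDext H \<sigma> \<alpha> p2 hu using vp2 hu(1) by unfold_locales auto
  have h1u: "h1 \<in> V hu" using h1 hu by simp
  let ?Y = "orb E2.Q h1"
  have evY: "evens ?Y" using E2.ext_evens[OF h1u] .
  have YV: "?Y \<inter> V hu = {h1, E2.y2 h1}" using E2.X_V[OF h1u] .
  have h1Y: "h1 \<in> ?Y" by (rule E2.qo.self_in_orb)
  have hpY: "hp h1 \<in> ?Y" using J_hp[OF evY h1H nirr[OF h1(1)] h1Y] .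
  have Ysub: "?Y \<inter> u \<subseteq> {h1, hp h1}"
  proof -
    have "hp h1 \<in> ?Y \<inter> V hu" using hpY hpu1 hu by simp
    hence "hp h1 = E2.y2 h1" using YV d5 by auto
    thus ?thesis using YV hu by auto
  qed
  have closed: "\<alpha> z \<in> ?Y \<and> p2 z \<in> ?Y" if z: "z \<in> ?Y" for z
  proof
    show "\<alpha> z \<in> ?Y" using E2.X_alpha[OF h1u z] .
    show "p2 z \<in> ?Y"
    proof (cases "z \<in> u")
      case True
      hence zz: "z = h1 \<or> z = hp h1" using Ysub z by blast
      have zH: "z \<in> H" using zz h1H hpu1 hu V_sub by blast
      have "z \<notin> V e"
      proof
        assume "z \<in> V e" thus False using eu True by blast
      qed
      hence "p2 z = hp z" using agree2 p1u[OF zH True] by simp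
      thus ?thesis using zz hp_props(3)[OF h1H nirr[OF h1(1)]] hpY h1Y by auto
    next
      case False
      hence "E2.p' z = p2 z" unfolding extp_def using hu by simp
      thus ?thesis using E2.X_p'[OF h1u z] by simp
    qed
  qed
  have "(stp p2)\<^sup>*\<^sup>* h1 e" using stp_sym[OF vp2 e(1) R2[OF h1(1)]] .
  hence "(stp p2)\<^sup>*\<^sup>* h1 h2" using R2[OF h2(1)] by simp
  hence "h2 \<in> ?Y" using stp_closed[OF _ h1Y closed] by blast
  hence "h2 \<in> {h1, hp h1}" using Ysub h2(1) by blast
  thus False using d1 d2 by blast
qed

lemma U_main:
  assumes "finite T" "T \<subseteq> Red"
  shows "\<forall>e\<in>H. irr e \<longrightarrow> (stp (pT T))\<^sup>*\<^sup>* e (\<sigma> e)"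
  using assms
proof (induction T rule: finite_induct)
  case empty
  show ?case
  proof (intro ballI impI)
    fix e assume e: "e \<in> H"
    have "straight_step \<sigma> \<alpha> x y \<Longrightarrow> stp (pT {}) x y" for x y
      unfolding straight_step_def stp_def pT_def by auto
    hence "(straight_step \<sigma> \<alpha>)\<^sup>*\<^sup>* e (\<sigma> e) \<Longrightarrow> (stp (pT {}))\<^sup>*\<^sup>* e (\<sigma> e)"
      by (metis mono_rtranclp)
    thus "(stp (pT {}))\<^sup>*\<^sup>* e (\<sigma> e)" using conn[OF e \<sigma>H[OF e]] by simp
  qed
next
  case (insert u T)
  show ?case
  proof (intro ballI impI)
    fix e assume e: "e \<in> H" "irr e"
    show "(stp (pT (insert u T)))\<^sup>*\<^sup>* e (\<sigma> e)"
    proof (rule ccontr)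
      assume nr: "\<not> (stp (pT (insert u T)))\<^sup>*\<^sup>* e (\<sigma> e)"
      show False
        by (rule U_step[of T u e]) (use insert nr e in auto)
    qed
  qed
qed

lemma U_final: "e \<in> H \<Longrightarrow> irr e \<Longrightarrow> (stp (pT Red))\<^sup>*\<^sup>* e (\<sigma> e)"
  using U_main[OF finite_Red] by blast

end

lemma card3_le: "card {x, y, z} \<le> 3"
  by (auto simp: card_insert_if)

definition nzd :: "int \<Rightarrow> int \<Rightarrow> bool" where
  "nzd m c \<longleftrightarrow> (\<forall>b. m dvd c * b \<longrightarrow> m dvd b)"

lemma nzd_of_not_zd: "\<not> zero_divisor_mod m c \<Longrightarrow> nzd m c"
  unfolding nzd_def zero_divisor_mod_def cong_0_iff by blast

lemma nzd_one: "nzd m 1"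
  unfolding nzd_def by simp

context KD
begin

lemma nb_all:
  assumes d: "d \<in> H"
  shows "F d \<noteq> F (\<sigma> d)" "F (\<sigma> d) \<noteq> F (\<sigma> (\<sigma> d))" "F (\<sigma> (\<sigma> d)) \<noteq> F (\<sigma> (\<sigma> (\<sigma> d)))"
    "F (\<sigma> (\<sigma> (\<sigma> d))) \<noteq> F d"
proof -
  have H: "\<sigma> d \<in> H" "\<sigma> (\<sigma> d) \<in> H" "\<sigma> (\<sigma> (\<sigma> d)) \<in> H" using d \<sigma>H by auto
  show "F d \<noteq> F (\<sigma> d)" using no_bridge[OF d] .
  show "F (\<sigma> d) \<noteq> F (\<sigma> (\<sigma> d))" using no_bridge[OF H(1)] .
  show "F (\<sigma> (\<sigma> d)) \<noteq> F (\<sigma> (\<sigma> (\<sigma> d)))" using no_bridge[OF H(2)] .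
  show "F (\<sigma> (\<sigma> (\<sigma> d))) \<noteq> F d" using no_bridge[OF H(3)] \<sigma>4[OF d] by simp
qed

lemma irr_iff:
  assumes d: "d \<in> H"
  shows "irreducible_vertex H \<sigma> \<alpha> (V d) \<longleftrightarrow> irr d"
proof -
  have "irreducible_vertex H \<sigma> \<alpha> (V d) \<longleftrightarrow> card {F d, F (\<sigma> d), F (\<sigma> (\<sigma> d)), F (\<sigma> (\<sigma> (\<sigma> d)))} = 4"
    unfolding irreducible_vertex_def incident_set[OF d] ..
  also have "\<dots> \<longleftrightarrow> irr d"
  proof
    assume c: "card {F d, F (\<sigma> d), F (\<sigma> (\<sigma> d)), F (\<sigma> (\<sigma> (\<sigma> d)))} = 4"
    show "irr d"
    proof (rule ccontr)
      assume "\<not> irr d"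
      hence "F (\<sigma> (\<sigma> d)) = F d \<or> F (\<sigma> (\<sigma> (\<sigma> d))) = F (\<sigma> d)" unfolding irr_def by auto
      hence "card {F d, F (\<sigma> d), F (\<sigma> (\<sigma> d)), F (\<sigma> (\<sigma> (\<sigma> d)))} \<le> 3"
      proof
        assume e: "F (\<sigma> (\<sigma> d)) = F d"
        have "{F d, F (\<sigma> d), F (\<sigma> (\<sigma> d)), F (\<sigma> (\<sigma> (\<sigma> d)))} = {F d, F (\<sigma> d), F (\<sigma> (\<sigma> (\<sigma> d)))}"
          using e by auto
        thus ?thesis using card3_le by metis
      next
        assume e: "F (\<sigma> (\<sigma> (\<sigma> d))) = F (\<sigma> d)"
        have "{F d, F (\<sigma> d), F (\<sigma> (\<sigma> d)), F (\<sigma> (\<sigma> (\<sigma> d)))} = {F d, F (\<sigma> d), F (\<sigma> (\<sigma> d))}"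
          using e by auto
        thus ?thesis using card3_le by metis
      qed
      thus False using c by simp
    qed
  next
    assume "irr d"
    hence "F d \<noteq> F (\<sigma> (\<sigma> d))" "F (\<sigma> d) \<noteq> F (\<sigma> (\<sigma> (\<sigma> d)))" unfolding irr_def by auto
    thus "card {F d, F (\<sigma> d), F (\<sigma> (\<sigma> d)), F (\<sigma> (\<sigma> (\<sigma> d)))} = 4"
      using nb_all[OF d] by (auto simp: card_insert_if)
  qed
  finally show ?thesis .
qed

end

locale KDG = KD H \<sigma> \<alpha> for H :: "'d set" and \<sigma> \<alpha> +
  fixes k :: enat and a :: "'d set \<Rightarrow> 'd set \<Rightarrow> int" and l :: "'d set \<Rightarrow> int"
  assumes k2: "2 \<le> k" and gv: "game_version k H \<sigma> \<alpha> a" and np: "null_pattern k H \<sigma> \<alpha> a l"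
begin

abbreviation "m \<equiv> modulus k"

abbreviation "inc d \<equiv> {F d, F (\<sigma> d), F (\<sigma> (\<sigma> d)), F (\<sigma> (\<sigma> (\<sigma> d)))}"



lemma inc_mem: "d \<in> H \<Longrightarrow> r \<in> inc d \<Longrightarrow> r \<in> dregions H \<sigma> \<alpha> \<and> incident (V d) r"
proof -
  assume d: "d \<in> H" and r: "r \<in> inc d"
  have "r \<in> {r \<in> dregions H \<sigma> \<alpha>. incident (V d) r}" using r incident_set[OF d] by simp
  thus ?thesis by simp
qed

lemma eqn: "d \<in> H \<Longrightarrow> m dvd (\<Sum>r\<in>inc d. a (V d) r * l r)"
proof -
  assume d: "d \<in> H"
  have "V d \<in> dvertices H \<sigma>" unfolding dvertices_eq using d by auto
  hence "[game_apply H \<sigma> \<alpha> a l (V d) = 0] (mod m)" using np unfolding null_pattern_def by blast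
  thus ?thesis unfolding game_apply_def incident_set[OF d] cong_0_iff .
qed

lemma gv_irr:
  assumes d: "d \<in> H" and i: "irr d"
  shows "\<exists>c. nzd m c \<and> (\<forall>r\<in>inc d. m dvd (a (V d) r - c))"
proof (cases "k = \<infinity>")
  case True
  have "V d \<in> dvertices H \<sigma>" unfolding dvertices_eq using d by auto
  moreover have "irreducible_vertex H \<sigma> \<alpha> (V d)" using irr_iff[OF d] i by simp
  moreover have G: "\<forall>v\<in>dvertices H \<sigma>. \<forall>r\<in>dregions H \<sigma> \<alpha>. incident v r \<longrightarrow>
          (irreducible_vertex H \<sigma> \<alpha> v \<or> card (v \<inter> r) = 1) \<longrightarrow> a v r = 1"
    using gv True unfolding game_version_def by simp
  ultimately have "\<forall>r\<in>dregions H \<sigma> \<alpha>. incident (V d) r \<longrightarrow> a (V d) r = 1"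
    by blast
  hence "\<forall>r\<in>inc d. a (V d) r = 1" using inc_mem[OF d] by simp
  thus ?thesis using nzd_one by (intro exI[of _ 1]) simp
next
  case False
  have "V d \<in> dvertices H \<sigma>" unfolding dvertices_eq using d by auto
  moreover have "irreducible_vertex H \<sigma> \<alpha> (V d)" using irr_iff[OF d] i by simp
  moreover have G: "\<forall>v\<in>dvertices H \<sigma>. (irreducible_vertex H \<sigma> \<alpha> v \<longrightarrow>
             (\<exists>c. \<not> zero_divisor_mod m c \<and>
                (\<forall>r\<in>dregions H \<sigma> \<alpha>. incident v r \<longrightarrow> [a v r = c] (mod m))))"
    using gv False unfolding game_version_def by simp
  ultimately obtain c where c: "\<not> zero_divisor_mod m c"
      "\<forall>r\<in>dregions H \<sigma> \<alpha>. incident (V d) r \<longrightarrow> [a (V d) r = c] (mod m)"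
    by blast
  have "\<forall>r\<in>inc d. m dvd (a (V d) r - c)"
  proof
    fix r assume "r \<in> inc d"
    hence "[a (V d) r = c] (mod m)" using inc_mem[OF d] c(2) by simp
    thus "m dvd (a (V d) r - c)" by (simp add: cong_iff_dvd_diff)
  qed
  thus ?thesis using nzd_of_not_zd[OF c(1)] by blast
qed

lemma gv_red:
  assumes d: "d \<in> H" and i: "\<not> irr d" and x: "x \<in> H" and c1: "card (V d \<inter> F x) = 1"
  shows "nzd m (a (V d) (F x))"
proof -
  have Vd: "V d \<in> dvertices H \<sigma>" unfolding dvertices_eq using d by auto
  have ni: "\<not> irreducible_vertex H \<sigma> \<alpha> (V d)" using irr_iff[OF d] i by simp
  have r: "F x \<in> dregions H \<sigma> \<alpha>" unfolding dregions_eq using x by auto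
  have inc: "incident (V d) (F x)" unfolding incident_def
  proof
    assume "V d \<inter> F x = {}" thus False using c1 by simp
  qed
  show ?thesis
  proof (cases "k = \<infinity>")
    case True
    have G: "\<forall>v\<in>dvertices H \<sigma>. \<forall>r\<in>dregions H \<sigma> \<alpha>. incident v r \<longrightarrow>
          (irreducible_vertex H \<sigma> \<alpha> v \<or> card (v \<inter> r) = 1) \<longrightarrow> a v r = 1"
      using gv True unfolding game_version_def by simp
    hence "a (V d) (F x) = 1" using Vd r inc c1 by blast
    thus ?thesis using nzd_one by simp
  next
    case False
    have G: "\<forall>v\<in>dvertices H \<sigma>. (\<not> irreducible_vertex H \<sigma> \<alpha> v \<longrightarrow>
             (\<forall>r\<in>dregions H \<sigma> \<alpha>. card (v \<inter> r) = 1 \<longrightarrow> \<not> zero_divisor_mod m (a v r)))"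
      using gv False unfolding game_version_def by simp
    hence "\<not> zero_divisor_mod m (a (V d) (F x))" using Vd r ni c1 by blast
    thus ?thesis by (rule nzd_of_not_zd)
  qed
qed

lemma VI:
  assumes d: "d \<in> H" and i: "irr d"
  shows "m dvd (l (F d) + l (F (\<sigma> d)) + l (F (\<sigma> (\<sigma> d))) + l (F (\<sigma> (\<sigma> (\<sigma> d)))))"
proof -
  obtain c where c: "nzd m c" "\<forall>r\<in>inc d. m dvd (a (V d) r - c)" using gv_irr[OF d i] by blast
  have fin: "finite (inc d)" by simp
  have s2: "m dvd (\<Sum>r\<in>inc d. (a (V d) r - c) * l r)"
  proof (rule dvd_sum)
    fix r assume "r \<in> inc d"
    hence "m dvd (a (V d) r - c)" using c(2) by blast
    thus "m dvd (a (V d) r - c) * l r" by (rule dvd_mult2)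
  qed
  have "m dvd (\<Sum>r\<in>inc d. a (V d) r * l r) - (\<Sum>r\<in>inc d. (a (V d) r - c) * l r)"
    using dvd_diff[OF eqn[OF d] s2] .
  also have "(\<Sum>r\<in>inc d. a (V d) r * l r) - (\<Sum>r\<in>inc d. (a (V d) r - c) * l r) = c * (\<Sum>r\<in>inc d. l r)"
    by (simp add: sum_subtractf[symmetric] sum_distrib_left algebra_simps)
  finally have "m dvd (\<Sum>r\<in>inc d. l r)" using c(1) unfolding nzd_def by blast
  moreover have "(\<Sum>r\<in>inc d. l r) = l (F d) + l (F (\<sigma> d)) + l (F (\<sigma> (\<sigma> d))) + l (F (\<sigma> (\<sigma> (\<sigma> d))))"
  proof -
    have "F d \<noteq> F (\<sigma> (\<sigma> d))" "F (\<sigma> d) \<noteq> F (\<sigma> (\<sigma> (\<sigma> d)))" using i unfolding irr_def by auto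
    thus ?thesis using nb_all[OF d] by (simp add: algebra_simps)
  qed
  ultimately show ?thesis by simp
qed

lemma VR:
  assumes d: "d \<in> H" and i: "\<not> irr d" and e: "F (\<sigma> (\<sigma> d)) = F d"
    and z0: "m dvd l (F d)" and z1: "m dvd l (F (\<sigma> d))"
  shows "m dvd l (F (\<sigma> (\<sigma> (\<sigma> d))))"
proof -
  have d3: "\<sigma> (\<sigma> (\<sigma> d)) \<in> H" using d \<sigma>H by auto
  have nd: "F (\<sigma> (\<sigma> (\<sigma> d))) \<noteq> F (\<sigma> d)" using no_double[OF d e] .
  have nb: "F d \<noteq> F (\<sigma> d)" "F (\<sigma> (\<sigma> (\<sigma> d))) \<noteq> F d" using nb_all[OF d] by auto
  have ie: "inc d = {F d, F (\<sigma> d), F (\<sigma> (\<sigma> (\<sigma> d)))}" using e by auto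
  have cI: "V d \<inter> F (\<sigma> (\<sigma> (\<sigma> d))) = {\<sigma> (\<sigma> (\<sigma> d))}"
  proof -
    have "V d \<inter> F (\<sigma> (\<sigma> (\<sigma> d))) = {y \<in> {d, \<sigma> d, \<sigma> (\<sigma> d), \<sigma> (\<sigma> (\<sigma> d))}. F y = F (\<sigma> (\<sigma> (\<sigma> d)))}"
      by (rule Vint_eq[OF d d3])
    also have "\<dots> = {\<sigma> (\<sigma> (\<sigma> d))}" using nb nd e by auto
    finally show ?thesis .
  qed
  have nz: "nzd m (a (V d) (F (\<sigma> (\<sigma> (\<sigma> d)))))" using gv_red[OF d i d3] cI by simp
  have "(\<Sum>r\<in>inc d. a (V d) r * l r) = a (V d) (F d) * l (F d) + a (V d) (F (\<sigma> d)) * l (F (\<sigma> d))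
      + a (V d) (F (\<sigma> (\<sigma> (\<sigma> d)))) * l (F (\<sigma> (\<sigma> (\<sigma> d))))"
    unfolding ie using nb nd by (simp add: algebra_simps)
  hence "m dvd a (V d) (F d) * l (F d) + a (V d) (F (\<sigma> d)) * l (F (\<sigma> d))
      + a (V d) (F (\<sigma> (\<sigma> (\<sigma> d)))) * l (F (\<sigma> (\<sigma> (\<sigma> d))))" using eqn[OF d] by simp
  moreover have "m dvd a (V d) (F d) * l (F d) + a (V d) (F (\<sigma> d)) * l (F (\<sigma> d))"
    using z0 z1 by simp
  ultimately have "m dvd a (V d) (F (\<sigma> (\<sigma> (\<sigma> d)))) * l (F (\<sigma> (\<sigma> (\<sigma> d))))"
    using dvd_add_right_iff by blast
  thus ?thesis using nz unfolding nzd_def by blast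
qed

end

context KDG
begin

definition sv :: "'d \<Rightarrow> int" where "sv d = l (F d) + l (F (\<sigma> d))"

lemma Red_mem: "d \<in> H \<Longrightarrow> \<not> irr d \<Longrightarrow> V d \<in> Red"
  unfolding Red_def by blast

lemma s_step:
  assumes d: "d \<in> H" and z0: "m dvd sv d" and st: "stp (pT Red) d z"
  shows "m dvd sv z"
proof -
  have dH: "\<sigma> d \<in> H" "\<sigma> (\<sigma> d) \<in> H" "\<sigma> (\<sigma> (\<sigma> d)) \<in> H" using d \<sigma>H by auto
  from st consider "z = \<alpha> d" | "z = pT Red d" unfolding stp_def by auto
  thus ?thesis
  proof cases
    case 1
    have "sv z = l (F (\<sigma> d)) + l (F d)"
      unfolding sv_def 1 using F_\<alpha>[OF d] F_\<sigma>\<alpha>[OF d] by simp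
    thus ?thesis using z0 unfolding sv_def by (simp add: add.commute)
  next
    case 2
    show ?thesis
    proof (cases "irr d")
      case True
      hence "V d \<notin> Red" using Red_irr[OF d] by blast
      hence z: "z = \<sigma> (\<sigma> d)" using 2 unfolding pT_def by simp
      have "m dvd sv d + sv z" using VI[OF d True] unfolding z sv_def \<sigma>4[OF d] by (simp add: add.assoc)
      thus ?thesis using z0 by (simp add: dvd_add_right_iff)
    next
      case False
      have "V d \<in> Red" using Red_mem[OF d False] .
      hence z: "z = hp d" using 2 unfolding pT_def by simp
      show ?thesis
      proof (cases "F (\<sigma> (\<sigma> d)) = F d")
        case True
        hence "z = \<sigma> d" unfolding z hp_def by simp
        hence "sv z = l (F (\<sigma> d)) + l (F d)" unfolding sv_def using True by simp
        thus ?thesis using z0 unfolding sv_def by (simp add: add.commute)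
      next
        case c: False
        have e: "F (\<sigma> (\<sigma> (\<sigma> d))) = F (\<sigma> d)" by (rule notirr[OF d False c])
        hence "z = \<sigma> (\<sigma> (\<sigma> d))" unfolding z hp_def using c by simp
        hence "sv z = l (F (\<sigma> d)) + l (F d)" unfolding sv_def using e \<sigma>4[OF d] by simp
        thus ?thesis using z0 unfolding sv_def by (simp add: add.commute)
      qed
    qed
  qed
qed

lemma vRed: "vstate (pT Red)" using pT_vstate by blast

lemma s_rt:
  assumes r: "(stp (pT Red))\<^sup>*\<^sup>* d z" and d: "d \<in> H" and z0: "m dvd sv d"
  shows "m dvd sv z"
  using r
proof (induction rule: rtranclp_induct)
  case base thus ?case using z0 by simp
next
  case (step y z)
  have "y \<in> H" using stp_H[OF vRed d step(1)] .
  thus ?case using s_step step by blast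
qed

definition good :: "'d \<Rightarrow> bool" where
  "good x \<longleftrightarrow> m dvd l (F x) \<and> m dvd l (F (\<sigma> x))"

lemma good_prop:
  assumes d0: "d0 \<in> H" "good d0" and r: "(straight_step \<sigma> \<alpha>)\<^sup>*\<^sup>* d0 x"
  shows "x \<in> H \<and> good x"
  using r
proof (induction rule: rtranclp_induct)
  case base thus ?case using d0 by simp
next
  case (step y z)
  have y: "y \<in> H" "good y" using step.IH by auto
  have yH: "\<sigma> y \<in> H" "\<sigma> (\<sigma> y) \<in> H" "\<sigma> (\<sigma> (\<sigma> y)) \<in> H" using y \<sigma>H by auto
  have g0: "m dvd l (F y)" "m dvd l (F (\<sigma> y))" using y(2) unfolding good_def by auto
  from step(2) consider "z = \<sigma> (\<sigma> y)" | "z = \<alpha> y" unfolding straight_step_def by auto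
  thus ?case
  proof cases
    case 2
    have "F z = F (\<sigma> y)" "F (\<sigma> z) = F y" unfolding 2 using F_\<alpha>[OF y(1)] F_\<sigma>\<alpha>[OF y(1)] by auto
    thus ?thesis using g0 \<alpha>H[OF y(1)] 2 unfolding good_def by simp
  next
    case 1
    have gz: "m dvd l (F (\<sigma> (\<sigma> y))) \<and> m dvd l (F (\<sigma> (\<sigma> (\<sigma> y))))"
    proof (cases "irr y")
      case True
      have sy: "m dvd sv y" using g0 unfolding sv_def by simp
      have "m dvd sv (\<sigma> y)" using s_rt[OF U_final[OF y(1) True] y(1) sy] .
      hence a1: "m dvd l (F (\<sigma> (\<sigma> y)))" using g0 unfolding sv_def by (simp add: dvd_add_right_iff)
      have "V y \<notin> Red" using Red_irr[OF y(1)] True by blast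
      hence "stp (pT Red) y (\<sigma> (\<sigma> y))" unfolding stp_def pT_def by simp
      hence "m dvd sv (\<sigma> (\<sigma> y))" using s_step[OF y(1) sy] by blast
      hence "m dvd l (F (\<sigma> (\<sigma> (\<sigma> y))))" using a1 unfolding sv_def by (simp add: dvd_add_right_iff)
      thus ?thesis using a1 by simp
    next
      case False
      show ?thesis
      proof (cases "F (\<sigma> (\<sigma> y)) = F y")
        case True
        have "m dvd l (F (\<sigma> (\<sigma> (\<sigma> y))))" using VR[OF y(1) False True g0] .
        thus ?thesis using True g0 by simp
      next
        case c: False
        have e: "F (\<sigma> (\<sigma> (\<sigma> y))) = F (\<sigma> y)" by (rule notirr[OF y(1) False c])
        have ni3: "\<not> irr (\<sigma> (\<sigma> (\<sigma> y)))"
          using irr_V[OF y(1), of "\<sigma> (\<sigma> (\<sigma> y))"] V_eq[OF y(1)] False by simp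
        have e3: "F (\<sigma> (\<sigma> (\<sigma> (\<sigma> (\<sigma> y))))) = F (\<sigma> (\<sigma> (\<sigma> y)))"
          using e \<sigma>4[OF y(1)] by simp
        have z3: "m dvd l (F (\<sigma> (\<sigma> (\<sigma> y))))" using e g0 by simp
        have z4: "m dvd l (F (\<sigma> (\<sigma> (\<sigma> (\<sigma> y)))))" using g0 \<sigma>4[OF y(1)] by simp
        have "m dvd l (F (\<sigma> (\<sigma> (\<sigma> (\<sigma> (\<sigma> (\<sigma> y)))))))"
          using VR[OF yH(3) ni3 e3 z3 z4] .
        hence "m dvd l (F (\<sigma> (\<sigma> y)))" using \<sigma>4[OF y(1)] by simp
        thus ?thesis using z3 by simp
      qed
    qed
    thus ?thesis using 1 yH unfolding good_def by simp
  qed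
qed

lemma all_zero:
  assumes r: "r1 \<in> dregions H \<sigma> \<alpha>" "r2 \<in> dregions H \<sigma> \<alpha>" and adj: "adjacent H \<alpha> r1 r2"
    and z1: "[l r1 = 0] (mod m)" and z2: "[l r2 = 0] (mod m)"
  shows "\<forall>r\<in>dregions H \<sigma> \<alpha>. [l r = 0] (mod m)"
proof -
  obtain d0 where d0: "d0 \<in> H" "d0 \<in> r1" "\<alpha> d0 \<in> r2" using adj unfolding adjacent_def by blast
  obtain x1 where x1: "x1 \<in> H" "r1 = F x1" using r(1) unfolding dregions_eq by auto
  obtain x2 where x2: "x2 \<in> H" "r2 = F x2" using r(2) unfolding dregions_eq by auto
  have "F d0 = r1" using F_mem[OF x1(1)] d0(2) x1(2) by simp
  moreover have "F (\<alpha> d0) = r2" using F_mem[OF x2(1)] d0(3) x2(2) by simp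
  hence "F (\<sigma> d0) = r2" using F_\<alpha>[OF d0(1)] by simp
  ultimately have g: "good d0" using z1 z2 unfolding good_def cong_0_iff by simp
  show ?thesis
  proof
    fix r assume "r \<in> dregions H \<sigma> \<alpha>"
    then obtain x where x: "x \<in> H" "r = F x" unfolding dregions_eq by auto
    have "good x" using good_prop[OF d0(1) g conn[OF d0(1) x(1)]] by simp
    thus "[l r = 0] (mod m)" unfolding good_def cong_0_iff x(2) by simp
  qed
qed

end

theorem mainTheorem6:
  fixes H :: "'d set" and \<sigma> \<alpha> :: "'d \<Rightarrow> 'd" and k :: enat
    and a :: "'d set \<Rightarrow> 'd set \<Rightarrow> int" and l :: "'d set \<Rightarrow> int"
    and r1 r2 :: "'d set"
  assumes "knot_diagram H \<sigma> \<alpha>"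
    and "2 \<le> k"
    and "game_version k H \<sigma> \<alpha> a"
    and "null_pattern k H \<sigma> \<alpha> a l"
    and "r1 \<in> dregions H \<sigma> \<alpha>" and "r2 \<in> dregions H \<sigma> \<alpha>" and "r1 \<noteq> r2"
    and "adjacent H \<alpha> r1 r2"
    and "[l r1 = 0] (mod modulus k)" and "[l r2 = 0] (mod modulus k)"
  shows "\<forall>r\<in>dregions H \<sigma> \<alpha>. [l r = 0] (mod modulus k)"
proof -
  interpret KDG H \<sigma> \<alpha> k a l
    using assms(1-4) by unfold_locales auto
  show ?thesis using all_zero assms(5,6,8-10) by blast
qed

end
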